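(* Let $T$ be a complete first-order theory in a countable language with an uncountable atomic model. (1) If $\theta(\mathbf z;\mathbf x)$ is extendible, then for any countable atomic model $M$ and any $\mathbf b\in M^{\lg(\mathbf z)}$, $\mathbf a\in M^{\lg(\mathbf x)}$ with $M\models\theta(\mathbf b,\mathbf a)$, there is $M_0\preceq M$ such that $\mathbf b\subseteq M_0$ and $\mathbf a\subseteq M\setminus M_0$. (2) If $\theta(\mathbf z;\mathbf x)$ is extendible and $\mathbf z'\subseteq\mathbf z$, $\mathbf x'\subseteq\mathbf x$, then the restriction $\theta\restriction_{\mathbf z';\mathbf x'}$ is extendible. (3) A complete formula $\theta(\mathbf z;\mathbf x)$ is extendible if and only if $\theta\restriction_{\mathbf z,x_i}$ is not pseudo-algebraic for every variable $x_i$ in $\mathbf x$.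
   Context: A complete formula is one isolating a complete type over $\emptyset$ (realized in an atomic set). For a complete formula $\theta(\mathbf w)$ and a subsequence $\mathbf v$ of $\mathbf w$, $\theta\restriction_{\mathbf v}$ denotes the complete formula equivalent to $\exists\mathbf u\,\theta(\mathbf v,\mathbf u)$, where $\mathbf u$ are the remaining variables. A complete formula $\theta(\mathbf z;\mathbf x)$ with the displayed partition of its free variables is extendible if there are countable atomic models $M\preceq N$ and tuples $\mathbf b\subseteq M$, $\mathbf a\subseteq N\setminus M$ (every coordinate of $\mathbf a$ outside $M$) with $N\models\theta(\mathbf b,\mathbf a)$. A complete formula $\phi(x,\mathbf a)$ in one variable $x$ is pseudo-algebraic if for some/any countable atomic $M$ containing $\mathbf a$ and any atomic $N\succeq M$ with $N\neq M$, $\phi(N,\mathbf a)=\phi(M,\mathbf a)$; a complete formula $\theta(\mathbf z,x_i)$ is called pseudo-algebraic (as a formula in $x_i$) if $\theta(\mathbf b,x_i)$ is pseudo-algebraic for a (any) $\mathbf b$ realizing $\theta\restriction_{\mathbf z}$. *)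

theory Defs
  imports Main "HOL-Library.Countable_Set" "HOL-Library.Sublist"
begin

text \<open>Function symbols of type 'f, relation symbols of type 'r (both countable types).
  A language assigns arities; symbols with arity None are not in the language.\<close>

datatype 'f trm = Var nat | Fn 'f "'f trm list"

datatype ('f, 'r) fm =
    Eq "'f trm" "'f trm"
  | Rel 'r "'f trm list"
  | Neg "('f, 'r) fm"
  | Conj "('f, 'r) fm" "('f, 'r) fm"
  | Ex nat "('f, 'r) fm"

type_synonym ('f, 'r) lang = "('f \<Rightarrow> nat option) \<times> ('r \<Rightarrow> nat option)"

fun wf_trm :: "('f, 'r) lang \<Rightarrow> 'f trm \<Rightarrow> bool" where
  "wf_trm L (Var n) = True"
| "wf_trm L (Fn f ts) = (fst L f = Some (length ts) \<and> (\<forall>t\<in>set ts. wf_trm L t))"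

fun wf_fm :: "('f, 'r) lang \<Rightarrow> ('f, 'r) fm \<Rightarrow> bool" where
  "wf_fm L (Eq t u) = (wf_trm L t \<and> wf_trm L u)"
| "wf_fm L (Rel r ts) = (snd L r = Some (length ts) \<and> (\<forall>t\<in>set ts. wf_trm L t))"
| "wf_fm L (Neg \<phi>) = wf_fm L \<phi>"
| "wf_fm L (Conj \<phi> \<psi>) = (wf_fm L \<phi> \<and> wf_fm L \<psi>)"
| "wf_fm L (Ex n \<phi>) = wf_fm L \<phi>"

fun fv_trm :: "'f trm \<Rightarrow> nat set" where
  "fv_trm (Var n) = {n}"
| "fv_trm (Fn f ts) = (\<Union>t\<in>set ts. fv_trm t)"

fun fv_fm :: "('f, 'r) fm \<Rightarrow> nat set" where
  "fv_fm (Eq t u) = fv_trm t \<union> fv_trm u"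
| "fv_fm (Rel r ts) = (\<Union>t\<in>set ts. fv_trm t)"
| "fv_fm (Neg \<phi>) = fv_fm \<phi>"
| "fv_fm (Conj \<phi> \<psi>) = fv_fm \<phi> \<union> fv_fm \<psi>"
| "fv_fm (Ex n \<phi>) = fv_fm \<phi> - {n}"

definition sentence :: "('f, 'r) lang \<Rightarrow> ('f, 'r) fm \<Rightarrow> bool" where
  "sentence L \<phi> \<longleftrightarrow> wf_fm L \<phi> \<and> fv_fm \<phi> = {}"

text \<open>Iterated existential quantification and restriction of a formula
  (\<open>\<theta>\<restriction>\<^sub>v\<close> = \<open>\<exists>u \<theta>\<close>, u the variables of w not in v).\<close>

fun exs :: "nat list \<Rightarrow> ('f, 'r) fm \<Rightarrow> ('f, 'r) fm" where
  "exs [] \<phi> = \<phi>"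
| "exs (v # vs) \<phi> = Ex v (exs vs \<phi>)"

definition restr :: "nat list \<Rightarrow> nat list \<Rightarrow> ('f, 'r) fm \<Rightarrow> ('f, 'r) fm" where
  "restr w v \<theta> = exs (filter (\<lambda>y. y \<notin> set v) w) \<theta>"

record ('a, 'f, 'r) struct =
  udom :: "'a set"
  fint :: "'f \<Rightarrow> 'a list \<Rightarrow> 'a"
  rint :: "'r \<Rightarrow> 'a list \<Rightarrow> bool"

fun evalt :: "('f \<Rightarrow> 'a list \<Rightarrow> 'a) \<Rightarrow> (nat \<Rightarrow> 'a) \<Rightarrow> 'f trm \<Rightarrow> 'a" where
  "evalt F s (Var n) = s n"
| "evalt F s (Fn f ts) = F f (map (evalt F s) ts)"

fun sat :: "('a, 'f, 'r) struct \<Rightarrow> (nat \<Rightarrow> 'a) \<Rightarrow> ('f, 'r) fm \<Rightarrow> bool" where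
  "sat M s (Eq t u) = (evalt (fint M) s t = evalt (fint M) s u)"
| "sat M s (Rel r ts) = rint M r (map (evalt (fint M) s) ts)"
| "sat M s (Neg \<phi>) = (\<not> sat M s \<phi>)"
| "sat M s (Conj \<phi> \<psi>) = (sat M s \<phi> \<and> sat M s \<psi>)"
| "sat M s (Ex n \<phi>) = (\<exists>a\<in>udom M. sat M (s(n := a)) \<phi>)"

definition is_struct :: "('f, 'r) lang \<Rightarrow> ('a, 'f, 'r) struct \<Rightarrow> bool" where
  "is_struct L M \<longleftrightarrow> udom M \<noteq> {} \<and>
     (\<forall>f n as. fst L f = Some n \<and> length as = n \<and> set as \<subseteq> udom M \<longrightarrow> fint M f as \<in> udom M)"

definition elem_sub :: "('f, 'r) lang \<Rightarrow> ('a, 'f, 'r) struct \<Rightarrow> ('a, 'f, 'r) struct \<Rightarrow> bool" where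
  "elem_sub L M N \<longleftrightarrow> is_struct L M \<and> is_struct L N \<and> udom M \<subseteq> udom N \<and>
     (\<forall>f n as. fst L f = Some n \<and> length as = n \<and> set as \<subseteq> udom M \<longrightarrow> fint M f as = fint N f as) \<and>
     (\<forall>r n as. snd L r = Some n \<and> length as = n \<and> set as \<subseteq> udom M \<longrightarrow> rint M r as = rint N r as) \<and>
     (\<forall>\<phi> s. wf_fm L \<phi> \<and> range s \<subseteq> udom M \<longrightarrow> (sat M s \<phi> \<longleftrightarrow> sat N s \<phi>))"

definition models :: "('f, 'r) lang \<Rightarrow> ('f, 'r) fm set \<Rightarrow> ('a, 'f, 'r) struct \<Rightarrow> bool" where
  "models L T M \<longleftrightarrow> is_struct L M \<and> (\<forall>\<phi>\<in>T. \<forall>s. range s \<subseteq> udom M \<longrightarrow> sat M s \<phi>)"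

text \<open>Semantic notions relative to all models of T whose universe lies in the type 'a.\<close>

definition complete_theory :: "'a itself \<Rightarrow> ('f, 'r) lang \<Rightarrow> ('f, 'r) fm set \<Rightarrow> bool" where
  "complete_theory (U :: 'a itself) L T \<longleftrightarrow> (\<forall>\<phi>\<in>T. sentence L \<phi>) \<and>
     (\<exists>M :: ('a, 'f, 'r) struct. models L T M) \<and>
     (\<forall>\<phi>. sentence L \<phi> \<longrightarrow>
        (\<forall>(M :: ('a, 'f, 'r) struct) s. models L T M \<and> range s \<subseteq> udom M \<longrightarrow> sat M s \<phi>) \<or>
        (\<forall>(M :: ('a, 'f, 'r) struct) s. models L T M \<and> range s \<subseteq> udom M \<longrightarrow> \<not> sat M s \<phi>))"

definition complete_fm :: "'a itself \<Rightarrow> ('f, 'r) lang \<Rightarrow> ('f, 'r) fm set \<Rightarrow> nat list \<Rightarrow> ('f, 'r) fm \<Rightarrow> bool" where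
  "complete_fm (U :: 'a itself) L T w \<theta> \<longleftrightarrow> wf_fm L \<theta> \<and> fv_fm \<theta> \<subseteq> set w \<and>
     (\<exists>(M :: ('a, 'f, 'r) struct) s. models L T M \<and> range s \<subseteq> udom M \<and> sat M s \<theta>) \<and>
     (\<forall>\<psi>. wf_fm L \<psi> \<and> fv_fm \<psi> \<subseteq> set w \<longrightarrow>
        (\<forall>(M :: ('a, 'f, 'r) struct) s. models L T M \<and> range s \<subseteq> udom M \<and> sat M s \<theta> \<longrightarrow> sat M s \<psi>) \<or>
        (\<forall>(M :: ('a, 'f, 'r) struct) s. models L T M \<and> range s \<subseteq> udom M \<and> sat M s \<theta> \<longrightarrow> \<not> sat M s \<psi>))"

definition atomic_model :: "('f, 'r) lang \<Rightarrow> ('f, 'r) fm set \<Rightarrow> ('a, 'f, 'r) struct \<Rightarrow> bool" where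
  "atomic_model L T M \<longleftrightarrow> models L T M \<and>
     (\<forall>w s. distinct w \<and> range s \<subseteq> udom M \<longrightarrow>
        (\<exists>\<theta>. complete_fm TYPE('a) L T w \<theta> \<and> sat M s \<theta>))"

definition cam :: "('f, 'r) lang \<Rightarrow> ('f, 'r) fm set \<Rightarrow> ('a, 'f, 'r) struct \<Rightarrow> bool" where
  "cam L T M \<longleftrightarrow> atomic_model L T M \<and> countable (udom M)"

definition partition_ok :: "nat list \<Rightarrow> nat list \<Rightarrow> ('f, 'r) fm \<Rightarrow> bool" where
  "partition_ok z x \<theta> \<longleftrightarrow> distinct (z @ x) \<and> fv_fm \<theta> \<subseteq> set (z @ x)"

definition extendible :: "'a itself \<Rightarrow> ('f, 'r) lang \<Rightarrow> ('f, 'r) fm set \<Rightarrow> nat list \<Rightarrow> nat list \<Rightarrow> ('f, 'r) fm \<Rightarrow> bool" where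
  "extendible (U :: 'a itself) L T z x \<theta> \<longleftrightarrow>
     (\<exists>(M :: ('a, 'f, 'r) struct) N s. cam L T M \<and> cam L T N \<and> elem_sub L M N \<and>
        range s \<subseteq> udom N \<and> s ` set z \<subseteq> udom M \<and> s ` set x \<inter> udom M = {} \<and> sat N s \<theta>)"

definition pseudo_alg :: "'a itself \<Rightarrow> ('f, 'r) lang \<Rightarrow> ('f, 'r) fm set \<Rightarrow> nat list \<Rightarrow> nat \<Rightarrow> ('f, 'r) fm \<Rightarrow> bool" where
  "pseudo_alg (U :: 'a itself) L T z y \<theta> \<longleftrightarrow>
     (\<exists>(M :: ('a, 'f, 'r) struct) s. cam L T M \<and> range s \<subseteq> udom M \<and> sat M s (Ex y \<theta>) \<and>
        (\<forall>N :: ('a, 'f, 'r) struct. atomic_model L T N \<and> elem_sub L M N \<and> udom N \<noteq> udom M \<longrightarrow>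
           {c \<in> udom N. sat N (s(y := c)) \<theta>} = {c \<in> udom M. sat M (s(y := c)) \<theta>}))"

end

theory Submission
  imports Defs
begin

instance trm :: (countable) countable by countable_datatype
instance fm :: (countable, countable) countable by countable_datatype

lemma finite_fv_trm: "finite (fv_trm t)"
  by (induction t) auto

lemma finite_fv_fm: "finite (fv_fm \<phi>)"
  by (induction \<phi>) (auto simp: finite_fv_trm)

lemma evalt_cong: "(\<And>v. v \<in> fv_trm t \<Longrightarrow> s v = s' v) \<Longrightarrow> evalt F s t = evalt F s' t"
proof (induction t)
  case (Fn f ts)
  have "map (evalt F s) ts = map (evalt F s') ts" using Fn by (auto simp: map_eq_conv)
  then show ?case by (simp only: evalt.simps)
qed simp

lemma sat_cong: "(\<And>v. v \<in> fv_fm \<phi> \<Longrightarrow> s v = s' v) \<Longrightarrow> sat M s \<phi> = sat M s' \<phi>"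
proof (induction \<phi> arbitrary: s s')
  case (Eq t u)
  have "evalt (fint M) s t = evalt (fint M) s' t" by (rule evalt_cong) (simp add: Eq.prems)
  moreover have "evalt (fint M) s u = evalt (fint M) s' u" by (rule evalt_cong) (simp add: Eq.prems)
  ultimately show ?case by (simp only: sat.simps)
next
  case (Rel r ts)
  have "map (evalt (fint M) s) ts = map (evalt (fint M) s') ts"
    unfolding map_eq_conv
  proof
    fix t assume "t \<in> set ts"
    then show "evalt (fint M) s t = evalt (fint M) s' t" by (intro evalt_cong Rel.prems) auto
  qed
  then show ?case by (simp only: sat.simps)
next
  case (Neg \<phi>)
  have "sat M s \<phi> = sat M s' \<phi>" by (rule Neg.IH) (simp add: Neg.prems)
  then show ?case by (simp only: sat.simps)
next
  case (Conj \<phi> \<psi>)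
  have "sat M s \<phi> = sat M s' \<phi>" by (rule Conj.IH(1)) (simp add: Conj.prems)
  moreover have "sat M s \<psi> = sat M s' \<psi>" by (rule Conj.IH(2)) (simp add: Conj.prems)
  ultimately show ?case by (simp only: sat.simps)
next
  case (Ex n \<phi>)
  have "sat M (s(n:=a)) \<phi> = sat M (s'(n:=a)) \<phi>" for a
  proof (rule Ex.IH)
    fix v assume "v \<in> fv_fm \<phi>"
    then show "(s(n:=a)) v = (s'(n:=a)) v" using Ex.prems[of v] by (cases "v = n") simp_all
  qed
  then show ?case by (simp only: sat.simps)
qed

fun rent :: "(nat \<Rightarrow> nat) \<Rightarrow> 'f trm \<Rightarrow> 'f trm" where
  "rent h (Var n) = Var (h n)"
| "rent h (Fn f ts) = Fn f (map (rent h) ts)"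

definition fresh :: "nat set \<Rightarrow> nat" where
  "fresh S = Suc (Max (insert 0 S))"

lemma fresh_notin: "finite S \<Longrightarrow> fresh S \<notin> S"
  unfolding fresh_def using Max_ge[of "insert 0 S"] by (auto simp: less_Suc_eq_le[symmetric]) 

fun ren :: "(nat \<Rightarrow> nat) \<Rightarrow> ('f, 'r) fm \<Rightarrow> ('f, 'r) fm" where
  "ren h (Eq t u) = Eq (rent h t) (rent h u)"
| "ren h (Rel r ts) = Rel r (map (rent h) ts)"
| "ren h (Neg \<phi>) = Neg (ren h \<phi>)"
| "ren h (Conj \<phi> \<psi>) = Conj (ren h \<phi>) (ren h \<psi>)"
| "ren h (Ex n \<phi>) = (let m = fresh (h ` (fv_fm \<phi> - {n})) in Ex m (ren (h(n:=m)) \<phi>))"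

lemma evalt_rent: "evalt F s (rent h t) = evalt F (s \<circ> h) t"
proof (induction t)
  case (Fn f ts)
  have "map (evalt F s \<circ> rent h) ts = map (evalt F (s \<circ> h)) ts" using Fn by (auto simp: map_eq_conv comp_def)
  then show ?case by (simp only: evalt.simps rent.simps map_map)
qed simp

lemma wf_rent: "wf_trm L (rent h t) = wf_trm L t"
  by (induction t) auto

lemma fv_rent: "fv_trm (rent h t) = h ` fv_trm t"
  by (induction t) auto

lemma wf_ren: "wf_fm L (ren h \<phi>) = wf_fm L \<phi>"
  by (induction \<phi> arbitrary: h) (auto simp: wf_rent Let_def)

lemma fv_ren: "fv_fm (ren h \<phi>) \<subseteq> h ` fv_fm \<phi>"
proof (induction \<phi> arbitrary: h)
  case (Ex n \<phi>)
  let ?m = "fresh (h ` (fv_fm \<phi> - {n}))"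
  have "fv_fm (ren (h(n:=?m)) \<phi>) \<subseteq> (h(n:=?m)) ` fv_fm \<phi>" by (rule Ex.IH)
  then show ?case by (auto simp: Let_def)
next
  case (Conj \<phi>1 \<phi>2)
  have "fv_fm (ren h \<phi>1) \<subseteq> h ` fv_fm \<phi>1" "fv_fm (ren h \<phi>2) \<subseteq> h ` fv_fm \<phi>2" using Conj.IH by auto
  then show ?case by (simp add: image_Un) blast
next
  case (Neg \<phi>) then show ?case by simp
next
  case (Rel r ts) then show ?case by (simp add: fv_rent) blast
next
  case (Eq t u) then show ?case by (simp add: fv_rent image_Un)
qed

lemma sat_ren: "sat M s (ren h \<phi>) = sat M (s \<circ> h) \<phi>"
proof (induction \<phi> arbitrary: s h)
  case (Eq t u) then show ?case by (simp add: evalt_rent del: comp_apply)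
next
  case (Rel r ts)
  have "map (evalt (fint M) s \<circ> rent h) ts = map (evalt (fint M) (s \<circ> h)) ts"
    by (auto simp: map_eq_conv evalt_rent)
  then show ?case by (simp only: sat.simps ren.simps map_map)
next
  case (Ex n \<phi>)
  define m where "m = fresh (h ` (fv_fm \<phi> - {n}))"
  have fr: "m \<notin> h ` (fv_fm \<phi> - {n})" unfolding m_def
    by (rule fresh_notin) (simp add: finite_fv_fm)
  have "sat M s (ren h (Ex n \<phi>)) = (\<exists>a\<in>udom M. sat M (s(m:=a) \<circ> h(n:=m)) \<phi>)"
    by (simp only: ren.simps Let_def m_def[symmetric] sat.simps Ex.IH)
  also have "\<dots> = (\<exists>a\<in>udom M. sat M ((s \<circ> h)(n:=a)) \<phi>)"
  proof -
    have "\<And>a. sat M (s(m:=a) \<circ> h(n:=m)) \<phi> = sat M ((s \<circ> h)(n:=a)) \<phi>"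
      by (rule sat_cong) (use fr in auto)
    then show ?thesis by simp
  qed
  finally show ?case by (simp only: sat.simps)
qed auto

lemma wf_exs: "wf_fm L (exs vs \<phi>) = wf_fm L \<phi>"
  by (induction vs) auto

lemma fv_exs: "fv_fm (exs vs \<phi>) = fv_fm \<phi> - set vs"
  by (induction vs) auto

lemma sat_exs_I: "range t \<subseteq> udom M \<Longrightarrow> sat M t \<phi> \<Longrightarrow> (\<forall>v. v \<notin> set vs \<longrightarrow> t v = s v)
  \<Longrightarrow> sat M s (exs vs \<phi>)"
proof (induction vs arbitrary: s)
  case Nil
  then have "t = s" by auto
  then show ?case using Nil by simp
next
  case (Cons u vs)
  have "sat M (s(u := t u)) (exs vs \<phi>)"
    by (rule Cons.IH) (use Cons.prems in auto)
  moreover have "t u \<in> udom M" using Cons.prems by auto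
  ultimately show ?case by auto
qed

lemma sat_exs_E: "range s \<subseteq> udom M \<Longrightarrow> sat M s (exs vs \<phi>) \<Longrightarrow>
  \<exists>t. range t \<subseteq> udom M \<and> (\<forall>v. v \<notin> set vs \<longrightarrow> t v = s v) \<and> sat M t \<phi>"
proof (induction vs arbitrary: s)
  case Nil then show ?case by auto
next
  case (Cons u vs)
  then obtain a where a: "a \<in> udom M" "sat M (s(u:=a)) (exs vs \<phi>)" by auto
  have "range (s(u:=a)) \<subseteq> udom M" using a Cons.prems by auto
  from Cons.IH[OF this a(2)] obtain t where "range t \<subseteq> udom M"
    "\<forall>v. v \<notin> set vs \<longrightarrow> t v = (s(u:=a)) v" "sat M t \<phi>" by blast
  then show ?case by (intro exI[of _ t]) auto
qed

lemma sat_exs_self: "range s \<subseteq> udom M \<Longrightarrow> sat M s \<phi> \<Longrightarrow> sat M s (exs vs \<phi>)"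
  by (rule sat_exs_I[of s]) auto

definition sl :: "'a list \<Rightarrow> 'a \<Rightarrow> nat \<Rightarrow> 'a" where
  "sl as d = (\<lambda>v. if v < length as then as ! v else d)"

lemma map_sl: "map (sl as d) [0..<length as] = as"
  by (rule nth_equalityI) (auto simp: sl_def)

lemma evalt_in: "is_struct L M \<Longrightarrow> wf_trm L t \<Longrightarrow> range s \<subseteq> udom M \<Longrightarrow> evalt (fint M) s t \<in> udom M"
proof (induction t)
  case (Fn f ts)
  have "set (map (evalt (fint M) s) ts) \<subseteq> udom M" using Fn by auto
  then show ?case using Fn.prems unfolding is_struct_def by auto
qed auto

definition TVc :: "('f, 'r) lang \<Rightarrow> ('a, 'f, 'r) struct \<Rightarrow> 'a set \<Rightarrow> bool" where
  "TVc L M D \<longleftrightarrow> (\<forall>\<phi> n s. wf_fm L \<phi> \<and> range s \<subseteq> D \<and> (\<exists>a\<in>udom M. sat M (s(n:=a)) \<phi>) \<longrightarrow>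
      (\<exists>a\<in>D. sat M (s(n:=a)) \<phi>))"

lemma fint_upd[simp]: "fint (M\<lparr>udom := D\<rparr>) = fint M" and rint_upd[simp]: "rint (M\<lparr>udom := D\<rparr>) = rint M"
  and udom_upd[simp]: "udom (M\<lparr>udom := D\<rparr>) = D"
  by simp_all

lemma TV_closed:
  fixes L :: "('f, 'r) lang" and M :: "('a, 'f, 'r) struct"
  assumes M: "is_struct L M" and D: "D \<subseteq> udom M" "D \<noteq> {}" and tv: "TVc L M D"
    and f: "fst L f = Some (length as)" and as: "set as \<subseteq> D"
  shows "fint M f as \<in> D"
proof -
  obtain d0 where d0: "d0 \<in> D" using D by auto
  let ?n = "length as"
  let ?s = "sl as d0"
  let ?\<phi> = "Eq (Var ?n) (Fn f (map Var [0..<?n])) :: ('f, 'r) fm"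
  have wf: "wf_fm L ?\<phi>" using f by simp
  have rs: "range ?s \<subseteq> D" using as d0 by (auto simp: sl_def)
  have ev: "map (evalt (fint M) (?s(?n := a))) (map Var [0..<?n]) = as" for a
  proof -
    have "map (evalt (fint M) (?s(?n := a))) (map Var [0..<?n]) = map ?s [0..<?n]" by simp
    then show ?thesis using map_sl by metis
  qed
  have sat_iff: "sat M (?s(?n:=a)) ?\<phi> \<longleftrightarrow> a = fint M f as" for a
    using ev[of a] by simp
  have "fint M f as \<in> udom M" using M f as D unfolding is_struct_def by blast
  then have "\<exists>a\<in>udom M. sat M (?s(?n:=a)) ?\<phi>" using sat_iff by blast
  then obtain a where "a \<in> D" "sat M (?s(?n:=a)) ?\<phi>" using tv wf rs unfolding TVc_def by blast
  then show ?thesis using sat_iff by simp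
qed

lemma TV_lemma:
  assumes M: "is_struct L M" and D: "D \<subseteq> udom M" "D \<noteq> {}" and tv: "TVc L M D"
  shows "elem_sub L (M\<lparr>udom := D\<rparr>) M"
proof -
  have st: "is_struct L (M\<lparr>udom := D\<rparr>)"
    unfolding is_struct_def using D TV_closed[OF M D tv] by auto
  have "wf_fm L \<phi> \<Longrightarrow> range s \<subseteq> D \<Longrightarrow> sat (M\<lparr>udom := D\<rparr>) s \<phi> = sat M s \<phi>" for \<phi> s
  proof (induction \<phi> arbitrary: s)
    case (Ex n \<phi>)
    have IH: "a \<in> D \<Longrightarrow> sat (M\<lparr>udom := D\<rparr>) (s(n:=a)) \<phi> = sat M (s(n:=a)) \<phi>" for a
      using Ex by (intro Ex.IH) auto
    show ?case
    proof
      assume "sat (M\<lparr>udom := D\<rparr>) s (Ex n \<phi>)"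
      then obtain a where "a \<in> D" "sat (M\<lparr>udom := D\<rparr>) (s(n:=a)) \<phi>" by auto
      then show "sat M s (Ex n \<phi>)" using IH D by auto
    next
      assume "sat M s (Ex n \<phi>)"
      then have "\<exists>a\<in>udom M. sat M (s(n:=a)) \<phi>" by simp
      then have "\<exists>a\<in>D. sat M (s(n:=a)) \<phi>" using tv Ex.prems unfolding TVc_def by simp
      then obtain a where "a \<in> D" "sat M (s(n:=a)) \<phi>" by blast
      then show "sat (M\<lparr>udom := D\<rparr>) s (Ex n \<phi>)" using IH by auto
    qed
  qed auto
  then show ?thesis unfolding elem_sub_def using st M D by auto
qed

lemma elem_sub_refl: "is_struct L M \<Longrightarrow> elem_sub L M M"
  unfolding elem_sub_def by auto

lemma elem_sub_trans: "elem_sub L M1 M2 \<Longrightarrow> elem_sub L M2 M3 \<Longrightarrow> elem_sub L M1 M3"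
  unfolding elem_sub_def
  apply (intro conjI)
       apply blast
      apply blast
     apply blast
    apply (metis subset_trans)
   apply (metis subset_trans)
  by (metis subset_trans)

lemma elem_sub_mid: "elem_sub L M N \<Longrightarrow> elem_sub L N0 N \<Longrightarrow> udom M \<subseteq> udom N0 \<Longrightarrow> elem_sub L M N0"
  unfolding elem_sub_def
  apply (intro conjI)
       apply blast
      apply blast
     apply blast
    apply (metis subset_trans)
   apply (metis subset_trans)
  by (metis subset_trans)

lemma elem_sub_sat: "elem_sub L M N \<Longrightarrow> wf_fm L \<phi> \<Longrightarrow> range s \<subseteq> udom M \<Longrightarrow> sat M s \<phi> = sat N s \<phi>"
  unfolding elem_sub_def by blast

lemma elem_sub_struct: "elem_sub L M N \<Longrightarrow> is_struct L M" "elem_sub L M N \<Longrightarrow> is_struct L N"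
  "elem_sub L M N \<Longrightarrow> udom M \<subseteq> udom N"
  unfolding elem_sub_def by blast+

lemma models_struct: "models L T M \<Longrightarrow> is_struct L M"
  unfolding models_def by blast

lemma atomic_models: "atomic_model L T M \<Longrightarrow> models L T M"
  unfolding atomic_model_def by blast

lemma cam_atomic: "cam L T M \<Longrightarrow> atomic_model L T M" and cam_countable: "cam L T M \<Longrightarrow> countable (udom M)"
  unfolding cam_def by blast+

lemma atomic_sub:
  fixes L :: "('f, 'r) lang" and M :: "('a, 'f, 'r) struct"
  assumes Twf: "\<forall>\<phi>\<in>T. wf_fm L \<phi>" and es: "elem_sub L M0 M" and at: "atomic_model L T M"
  shows "atomic_model L T M0"
proof -
  have sub: "udom M0 \<subseteq> udom M" using es by (rule elem_sub_struct)
  have "models L T M0" unfolding models_def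
  proof (intro conjI ballI allI impI)
    show "is_struct L M0" using es by (rule elem_sub_struct)
  next
    fix \<phi> and s :: "nat \<Rightarrow> 'a" assume "\<phi> \<in> T" "range s \<subseteq> udom M0"
    then show "sat M0 s \<phi>" using at sub Twf elem_sub_sat[OF es, of \<phi> s] unfolding atomic_model_def models_def
      by blast
  qed
  moreover have "\<exists>\<theta>. complete_fm TYPE('a) L T w \<theta> \<and> sat M0 s \<theta>" if d: "distinct w" and r: "range s \<subseteq> udom M0" for w and s :: "nat \<Rightarrow> 'a"
  proof -
    obtain \<theta> where th: "complete_fm TYPE('a) L T w \<theta>" "sat M s \<theta>" using at d r sub unfolding atomic_model_def by blast
    then have "wf_fm L \<theta>" unfolding complete_fm_def by blast
    then show ?thesis using th elem_sub_sat[OF es, of \<theta> s] r by blast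
  qed
  ultimately show ?thesis unfolding atomic_model_def by blast
qed

lemma cam_sub:
  assumes Twf: "\<forall>\<phi>\<in>T. wf_fm L \<phi>" and es: "elem_sub L M0 M" and at: "atomic_model L T M"
    and c: "countable (udom M0)"
  shows "cam L T M0"
  using atomic_sub[OF Twf es at] c unfolding cam_def by blast

definition teq :: "('f, 'r) lang \<Rightarrow> ('a, 'f, 'r) struct \<Rightarrow> (nat \<Rightarrow> 'a) \<Rightarrow> ('a, 'f, 'r) struct \<Rightarrow> (nat \<Rightarrow> 'a) \<Rightarrow> nat set \<Rightarrow> bool" where
  "teq L A sA M sM V \<longleftrightarrow> (\<forall>\<phi>. wf_fm L \<phi> \<and> fv_fm \<phi> \<subseteq> V \<longrightarrow> (sat A sA \<phi> \<longleftrightarrow> sat M sM \<phi>))"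

primrec build :: "'b \<Rightarrow> (nat \<Rightarrow> 'b \<Rightarrow> 'b) \<Rightarrow> nat \<Rightarrow> 'b" where
  "build b F 0 = b"
| "build b F (Suc k) = F k (build b F k)"

lemma fresh_gt: "finite S \<Longrightarrow> v \<in> S \<Longrightarrow> v < fresh S"
proof -
  assume "finite S" "v \<in> S"
  then have "v \<le> Max (insert 0 S)" by (intro Max_ge) auto
  then show ?thesis unfolding fresh_def by simp
qed

lemma complete_fm_same:
  assumes c: "complete_fm (U :: 'a itself) L T w \<chi>" and p: "wf_fm L \<phi>" "fv_fm \<phi> \<subseteq> set w"
    and a: "models L T (A :: ('a, 'f, 'r) struct)" "range sA \<subseteq> udom A" "sat A sA \<chi>"
    and m: "models L T (M :: ('a, 'f, 'r) struct)" "range sM \<subseteq> udom M" "sat M sM \<chi>"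
  shows "sat A sA \<phi> \<longleftrightarrow> sat M sM \<phi>"
proof -
  have "(\<forall>(M :: ('a, 'f, 'r) struct) s. models L T M \<and> range s \<subseteq> udom M \<and> sat M s \<chi> \<longrightarrow> sat M s \<phi>) \<or>
        (\<forall>(M :: ('a, 'f, 'r) struct) s. models L T M \<and> range s \<subseteq> udom M \<and> sat M s \<chi> \<longrightarrow> \<not> sat M s \<phi>)"
    using c p unfolding complete_fm_def by blast
  then show ?thesis using a m by blast
qed

lemma forth:
  fixes L :: "('f, 'r) lang" and A M :: "('a, 'f, 'r) struct"
  assumes A: "cam L T A" and M: "models L T M" and V: "finite V"
    and rA: "range sA \<subseteq> udom A" and rM: "range sM \<subseteq> udom M" and te: "teq L A sA M sM V"
  shows "\<exists>f. (\<forall>a\<in>udom A. f a \<in> udom M) \<and> (\<forall>v\<in>V. f (sA v) = sM v) \<and>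
           (\<forall>\<phi> s. wf_fm L \<phi> \<and> range s \<subseteq> udom A \<longrightarrow> (sat A s \<phi> \<longleftrightarrow> sat M (f \<circ> s) \<phi>))"
proof -
  have Aat: "atomic_model L T A" and Ac: "countable (udom A)" using A unfolding cam_def by auto
  have Am: "models L T A" using Aat by (rule atomic_models)
  have Ane: "udom A \<noteq> {}" using Am unfolding models_def is_struct_def by auto
  have Mne: "udom M \<noteq> {}" using M unfolding models_def is_struct_def by auto
  then obtain d0 where d0: "d0 \<in> udom M" by auto
  define m0 where "m0 = fresh V"
  have Vm0: "v \<in> V \<Longrightarrow> v < m0" for v unfolding m0_def using fresh_gt[OF V] .
  define e where "e = from_nat_into (udom A)"
  have eA: "e k \<in> udom A" for k unfolding e_def using from_nat_into[OF Ane] .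
  have esurj: "a \<in> udom A \<Longrightarrow> \<exists>k. e k = a" for a unfolding e_def using from_nat_into_surj[OF Ac] by blast
  define SA where "SA = (\<lambda>v. if v < m0 then sA v else e (v - m0))"
  define SM where "SM = (\<lambda>g v. if v < m0 then sM v else g (v - m0))"
  define W where "W = (\<lambda>k. V \<union> {m0..<m0+k})"
  define P where "P = (\<lambda>k g. range g \<subseteq> udom M \<and> teq L A SA M (SM g) (W k))"
  have rSA: "range SA \<subseteq> udom A" using rA eA unfolding SA_def by auto
  have rSM: "range g \<subseteq> udom M \<Longrightarrow> range (SM g) \<subseteq> udom M" for g using rM unfolding SM_def by auto
  have P0: "P 0 (\<lambda>_. d0)"
    unfolding P_def teq_def
  proof (intro conjI allI impI)
    show "range (\<lambda>_. d0) \<subseteq> udom M" using d0 by auto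
  next
    fix \<phi> assume \<phi>: "wf_fm L \<phi> \<and> fv_fm \<phi> \<subseteq> W 0"
    then have fvV: "fv_fm \<phi> \<subseteq> V" unfolding W_def by auto
    have "sat A SA \<phi> = sat A sA \<phi>" by (rule sat_cong) (use fvV Vm0 in \<open>auto simp: SA_def\<close>)
    moreover have "sat M (SM (\<lambda>_. d0)) \<phi> = sat M sM \<phi>" by (rule sat_cong) (use fvV Vm0 in \<open>auto simp: SM_def\<close>)
    ultimately show "sat A SA \<phi> = sat M (SM (\<lambda>_. d0)) \<phi>" using te \<phi> fvV unfolding teq_def by blast
  qed
  have step: "\<exists>d. P (Suc k) (g(k:=d))" if Pk: "P k g" for k g
  proof -
    define w where "w = sorted_list_of_set (W (Suc k))"
    have finW: "finite (W j)" for j unfolding W_def using V by auto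
    have dw: "distinct w" and sw: "set w = W (Suc k)" unfolding w_def using finW by auto
    obtain \<chi> where chi: "complete_fm TYPE('a) L T w \<chi>" "sat A SA \<chi>"
      using Aat dw rSA unfolding atomic_model_def by blast
    have wfchi: "wf_fm L \<chi>" and fvchi: "fv_fm \<chi> \<subseteq> W (Suc k)" using chi(1) sw unfolding complete_fm_def by auto
    have fvpsi: "fv_fm (Ex (m0+k) \<chi>) \<subseteq> W k" using fvchi unfolding W_def by auto
    have SAk: "SA(m0+k := e k) = SA" unfolding SA_def by auto
    have "sat A SA (Ex (m0+k) \<chi>)" using chi(2) eA SAk by (auto intro!: bexI[of _ "e k"])
    moreover have tk: "teq L A SA M (SM g) (W k)" using Pk unfolding P_def by blast
    moreover have "wf_fm L (Ex (m0+k) \<chi>)" using wfchi by simp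
    ultimately have "sat M (SM g) (Ex (m0+k) \<chi>)" using fvpsi unfolding teq_def by blast
    then obtain d where d: "d \<in> udom M" "sat M ((SM g)(m0+k := d)) \<chi>" by auto
    have SMk: "(SM g)(m0+k := d) = SM (g(k:=d))" unfolding SM_def by (auto simp: fun_eq_iff)
    have rg: "range (g(k:=d)) \<subseteq> udom M" using Pk d unfolding P_def by auto
    have "teq L A SA M (SM (g(k:=d))) (W (Suc k))" unfolding teq_def
    proof (intro allI impI)
      fix \<phi> assume \<phi>: "wf_fm L \<phi> \<and> fv_fm \<phi> \<subseteq> W (Suc k)"
      show "sat A SA \<phi> = sat M (SM (g(k := d))) \<phi>"
        by (rule complete_fm_same[OF chi(1)]) (use \<phi> sw Am rSA chi M rSM[OF rg] d SMk in auto)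
    qed
    then show ?thesis using rg unfolding P_def by blast
  qed
  define F where "F = (\<lambda>k g. g(k := SOME d. P (Suc k) (g(k:=d))))"
  define seq where "seq = build (\<lambda>_. d0) F"
  have Pseq: "P k (seq k)" for k
  proof (induction k)
    case 0 then show ?case using P0 by (simp add: seq_def)
  next
    case (Suc k)
    have eq: "seq (Suc k) = (seq k)(k := SOME d. P (Suc k) ((seq k)(k:=d)))" by (simp add: seq_def F_def)
    show ?case unfolding eq by (rule someI_ex[OF step[OF Suc]])
  qed
  have stab: "i < k \<Longrightarrow> seq k i = seq (Suc i) i" for i k
  proof (induction k)
    case 0 then show ?case by simp
  next
    case (Suc k)
    show ?case
    proof (cases "i = k")
      case True then show ?thesis by simp
    next
      case False
      then have "i < k" using Suc.prems by simp
      then show ?thesis using Suc.IH False by (simp add: seq_def F_def)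
    qed
  qed
  define gM where "gM = (\<lambda>i. seq (Suc i) i)"
  have rgM: "range gM \<subseteq> udom M" using Pseq unfolding gM_def P_def by blast
  have key: "wf_fm L \<phi> \<Longrightarrow> fv_fm \<phi> \<subseteq> V \<union> {m0..} \<Longrightarrow> sat A SA \<phi> = sat M (SM gM) \<phi>" for \<phi>
  proof -
    assume wf: "wf_fm L \<phi>" and fv: "fv_fm \<phi> \<subseteq> V \<union> {m0..}"
    define k where "k = fresh (fv_fm \<phi>)"
    have kgt: "v \<in> fv_fm \<phi> \<Longrightarrow> v < k" for v unfolding k_def by (rule fresh_gt[OF finite_fv_fm])
    have fvW: "fv_fm \<phi> \<subseteq> W k"
    proof
      fix v assume v: "v \<in> fv_fm \<phi>"
      then have "v < k" by (rule kgt)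
      moreover have "v \<in> V \<or> m0 \<le> v" using v fv by auto
      ultimately show "v \<in> W k" unfolding W_def by auto
    qed
    have "sat A SA \<phi> = sat M (SM (seq k)) \<phi>" using Pseq[of k] wf fvW unfolding P_def teq_def by blast
    also have "\<dots> = sat M (SM gM) \<phi>"
    proof (rule sat_cong)
      fix v assume v: "v \<in> fv_fm \<phi>"
      show "SM (seq k) v = SM gM v"
      proof (cases "v < m0")
        case False
        then have "v - m0 < k" using kgt[OF v] by simp
        then have "seq k (v - m0) = seq (Suc (v - m0)) (v - m0)" by (rule stab)
        then show ?thesis using False unfolding SM_def gM_def by simp
      qed (simp add: SM_def)
    qed
    finally show ?thesis .
  qed
  define idx where "idx = (\<lambda>a. LEAST i. e i = a)"
  have eidx: "e (idx a) = a" if a: "a \<in> udom A" for a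
  proof -
    have "\<exists>k. e k = a" using esurj[OF a] .
    then show ?thesis unfolding idx_def by (rule LeastI_ex)
  qed
  define f where "f = (\<lambda>a. gM (idx a))"
  have fM: "\<forall>a\<in>udom A. f a \<in> udom M" using rgM unfolding f_def by auto
  have elem: "sat A s \<phi> = sat M (f \<circ> s) \<phi>" if wf: "wf_fm L \<phi>" and rs: "range s \<subseteq> udom A" for \<phi> s
  proof -
    define h where "h = (\<lambda>v. m0 + idx (s v))"
    have c1: "SA \<circ> h = s"
    proof
      fix v
      have "s v \<in> udom A" using rs by auto
      then show "(SA \<circ> h) v = s v" using eidx unfolding SA_def h_def by simp
    qed
    have c2: "SM gM \<circ> h = f \<circ> s"
    proof
      fix v show "(SM gM \<circ> h) v = (f \<circ> s) v" unfolding SM_def h_def f_def by simp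
    qed
    have fvr: "fv_fm (ren h \<phi>) \<subseteq> V \<union> {m0..}" using fv_ren[of h \<phi>] unfolding h_def by auto
    have "sat A s \<phi> = sat A SA (ren h \<phi>)" using c1 by (simp add: sat_ren)
    also have "\<dots> = sat M (SM gM) (ren h \<phi>)" using key[OF _ fvr] wf by (simp add: wf_ren)
    also have "\<dots> = sat M (f \<circ> s) \<phi>" using c2 by (simp add: sat_ren)
    finally show ?thesis .
  qed
  have fV: "f (sA v) = sM v" if v: "v \<in> V" for v
  proof -
    let ?\<phi> = "Eq (Var v) (Var (m0 + idx (sA v))) :: ('f, 'r) fm"
    have "sA v \<in> udom A" using rA by auto
    then have "e (idx (sA v)) = sA v" by (rule eidx)
    then have "sat A SA ?\<phi>" using Vm0[OF v] unfolding SA_def by simp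
    moreover have "sat A SA ?\<phi> = sat M (SM gM) ?\<phi>" by (rule key) (use v in auto)
    ultimately have "sat M (SM gM) ?\<phi>" by simp
    then show ?thesis using Vm0[OF v] unfolding SM_def f_def by simp
  qed
  show ?thesis using fM fV elem by blast
qed

lemma elem_inj:
  assumes el: "\<forall>\<phi> s. wf_fm L \<phi> \<and> range s \<subseteq> udom A \<longrightarrow> (sat A s \<phi> \<longleftrightarrow> sat M (f \<circ> s) \<phi>)"
  shows "inj_on f (udom A)"
proof
  fix a b assume ab: "a \<in> udom A" "b \<in> udom A" "f a = f b"
  define s where "s = (\<lambda>v::nat. if v = 0 then a else b)"
  have rs: "range s \<subseteq> udom A" using ab unfolding s_def by auto
  let ?\<phi> = "Eq (Var 0) (Var 1) :: ('a, 'b) fm"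
  have "sat M (f \<circ> s) ?\<phi>" using ab(3) unfolding s_def by simp
  then have "sat A s ?\<phi>" using el rs by (metis wf_fm.simps(1) wf_trm.simps(1))
  then show "a = b" unfolding s_def by simp
qed

lemma shrink:
  fixes L :: "('f, 'r) lang" and A B M :: "('a, 'f, 'r) struct"
  assumes Twf: "\<forall>\<phi>\<in>T. wf_fm L \<phi>" and A: "cam L T A" and BA: "elem_sub L B A" and Bc: "countable (udom B)"
    and M: "cam L T M" and V: "finite V"
    and rA: "range sA \<subseteq> udom A" and rM: "range sM \<subseteq> udom M" and te: "teq L A sA M sM V"
  shows "\<exists>M0. cam L T M0 \<and> elem_sub L M0 M \<and> (\<forall>v\<in>V. sA v \<in> udom B \<longrightarrow> sM v \<in> udom M0)
            \<and> (\<forall>v\<in>V. sA v \<notin> udom B \<longrightarrow> sM v \<notin> udom M0)"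
proof -
  have Mat: "atomic_model L T M" using M by (rule cam_atomic)
  have Mm: "models L T M" using Mat by (rule atomic_models)
  obtain f where fM: "\<forall>a\<in>udom A. f a \<in> udom M" and fV: "\<forall>v\<in>V. f (sA v) = sM v"
    and el: "\<forall>\<phi> s. wf_fm L \<phi> \<and> range s \<subseteq> udom A \<longrightarrow> (sat A s \<phi> \<longleftrightarrow> sat M (f \<circ> s) \<phi>)"
    using forth[OF A Mm V rA rM te] by blast
  have inj: "inj_on f (udom A)" using el by (rule elem_inj)
  have BsA: "udom B \<subseteq> udom A" using BA by (rule elem_sub_struct)
  have Bs: "is_struct L B" using BA by (rule elem_sub_struct)
  define D where "D = f ` udom B"
  have DM: "D \<subseteq> udom M" using fM BsA unfolding D_def by auto
  have Dne: "D \<noteq> {}" using Bs unfolding D_def is_struct_def by auto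
  have tv: "TVc L M D" unfolding TVc_def
  proof (intro allI impI)
    fix \<phi> n s assume h: "wf_fm L \<phi> \<and> range s \<subseteq> D \<and> (\<exists>a\<in>udom M. sat M (s(n := a)) \<phi>)"
    define t where "t = inv_into (udom B) f \<circ> s"
    have rt: "range t \<subseteq> udom B"
    proof
      fix y assume "y \<in> range t"
      then obtain v where v: "y = t v" by auto
      have "s v \<in> f ` udom B" using h unfolding D_def by auto
      then show "y \<in> udom B" unfolding v t_def by (simp add: inv_into_into)
    qed
    have ft: "f \<circ> t = s"
    proof
      fix v have "s v \<in> f ` udom B" using h unfolding D_def by auto
      then show "(f \<circ> t) v = s v" unfolding t_def by (simp add: f_inv_into_f)
    qed
    have wfE: "wf_fm L (Ex n \<phi>)" using h by simp
    have "sat M (f \<circ> t) (Ex n \<phi>)" using h ft by simp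
    then have "sat A t (Ex n \<phi>)" using el wfE rt BsA by blast
    then have "sat B t (Ex n \<phi>)" using elem_sub_sat[OF BA wfE] rt by blast
    then obtain b where b: "b \<in> udom B" "sat B (t(n:=b)) \<phi>" by auto
    have rtb: "range (t(n:=b)) \<subseteq> udom B" using rt b by auto
    then have "sat A (t(n:=b)) \<phi>" using b elem_sub_sat[OF BA] h by blast
    then have "sat M (f \<circ> (t(n:=b))) \<phi>" using el h rtb BsA by blast
    moreover have "f \<circ> (t(n:=b)) = s(n := f b)" using ft by (auto simp: fun_eq_iff)
    ultimately show "\<exists>a\<in>D. sat M (s(n := a)) \<phi>" using b unfolding D_def by auto
  qed
  define M0 where "M0 = M\<lparr>udom := D\<rparr>"
  have es: "elem_sub L M0 M" unfolding M0_def by (rule TV_lemma[OF models_struct[OF Mm] DM Dne tv])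
  have cD: "countable (udom M0)" unfolding M0_def D_def using Bc by simp
  have cam0: "cam L T M0" by (rule cam_sub[OF Twf es Mat cD])
  have c1: "\<forall>v\<in>V. sA v \<in> udom B \<longrightarrow> sM v \<in> udom M0" using fV unfolding M0_def D_def by force
  have c2: "\<forall>v\<in>V. sA v \<notin> udom B \<longrightarrow> sM v \<notin> udom M0"
  proof (intro ballI impI notI)
    fix v assume v: "v \<in> V" "sA v \<notin> udom B" "sM v \<in> udom M0"
    then obtain b where b: "b \<in> udom B" "sM v = f b" unfolding M0_def D_def by auto
    have "f (sA v) = f b" using fV v b by simp
    moreover have "sA v \<in> udom A" using rA by auto
    ultimately have "sA v = b" using inj b BsA by (auto dest: inj_onD)
    then show False using v b by simp
  qed
  show ?thesis using cam0 es c1 c2 by blast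
qed

lemma complete_exs:
  fixes U :: "'a itself" and L :: "('f, 'r) lang"
  assumes c: "complete_fm U L T w \<theta>" and sv: "set v \<subseteq> set w" and cov: "set w - set us \<subseteq> set v"
    and disj: "set us \<inter> set v = {}"
  shows "complete_fm U L T v (exs us \<theta>)"
proof -
  have wf: "wf_fm L \<theta>" and fvt: "fv_fm \<theta> \<subseteq> set w" using c unfolding complete_fm_def by auto
  obtain M0 :: "('a, 'f, 'r) struct" and s0 where r: "models L T M0" "range s0 \<subseteq> udom M0" "sat M0 s0 \<theta>"
    using c unfolding complete_fm_def by blast
  have real: "\<exists>(M :: ('a, 'f, 'r) struct) s. models L T M \<and> range s \<subseteq> udom M \<and> sat M s (exs us \<theta>)"
    using r sat_exs_self by blast
  have dec: "(\<forall>(M :: ('a, 'f, 'r) struct) s. models L T M \<and> range s \<subseteq> udom M \<and> sat M s (exs us \<theta>) \<longrightarrow> sat M s \<psi>) \<or>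
        (\<forall>(M :: ('a, 'f, 'r) struct) s. models L T M \<and> range s \<subseteq> udom M \<and> sat M s (exs us \<theta>) \<longrightarrow> \<not> sat M s \<psi>)"
    if \<psi>: "wf_fm L \<psi>" "fv_fm \<psi> \<subseteq> set v" for \<psi>
  proof -
    have eq: "sat M s \<psi> = sat M t \<psi>" if ag: "\<forall>x. x \<notin> set us \<longrightarrow> t x = s x" for M :: "('a, 'f, 'r) struct" and s t
    proof (rule sat_cong)
      fix x assume "x \<in> fv_fm \<psi>"
      then have "x \<in> set v" using \<psi>(2) by blast
      then have "x \<notin> set us" using disj by blast
      then show "s x = t x" using ag by simp
    qed
    have "(\<forall>(M :: ('a, 'f, 'r) struct) s. models L T M \<and> range s \<subseteq> udom M \<and> sat M s \<theta> \<longrightarrow> sat M s \<psi>) \<or>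
        (\<forall>(M :: ('a, 'f, 'r) struct) s. models L T M \<and> range s \<subseteq> udom M \<and> sat M s \<theta> \<longrightarrow> \<not> sat M s \<psi>)"
      using c \<psi> sv unfolding complete_fm_def by blast
    then show ?thesis
    proof
      assume H: "\<forall>(M :: ('a, 'f, 'r) struct) s. models L T M \<and> range s \<subseteq> udom M \<and> sat M s \<theta> \<longrightarrow> sat M s \<psi>"
      have "\<forall>(M :: ('a, 'f, 'r) struct) s. models L T M \<and> range s \<subseteq> udom M \<and> sat M s (exs us \<theta>) \<longrightarrow> sat M s \<psi>"
      proof (intro allI impI)
        fix M :: "('a, 'f, 'r) struct" and s assume a: "models L T M \<and> range s \<subseteq> udom M \<and> sat M s (exs us \<theta>)"
        then have a1: "range s \<subseteq> udom M" and a2: "sat M s (exs us \<theta>)" and a3: "models L T M" by auto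
        obtain t where t: "range t \<subseteq> udom M" "\<forall>x. x \<notin> set us \<longrightarrow> t x = s x" "sat M t \<theta>"
          using sat_exs_E[OF a1 a2] by blast
        have "sat M t \<psi>" using H[rule_format, of M t] a3 t by blast
        then show "sat M s \<psi>" using eq[OF t(2)] by simp
      qed
      then show ?thesis by (rule disjI1)
    next
      assume H: "\<forall>(M :: ('a, 'f, 'r) struct) s. models L T M \<and> range s \<subseteq> udom M \<and> sat M s \<theta> \<longrightarrow> \<not> sat M s \<psi>"
      have "\<forall>(M :: ('a, 'f, 'r) struct) s. models L T M \<and> range s \<subseteq> udom M \<and> sat M s (exs us \<theta>) \<longrightarrow> \<not> sat M s \<psi>"
      proof (intro allI impI)
        fix M :: "('a, 'f, 'r) struct" and s assume a: "models L T M \<and> range s \<subseteq> udom M \<and> sat M s (exs us \<theta>)"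
        then have a1: "range s \<subseteq> udom M" and a2: "sat M s (exs us \<theta>)" and a3: "models L T M" by auto
        obtain t where t: "range t \<subseteq> udom M" "\<forall>x. x \<notin> set us \<longrightarrow> t x = s x" "sat M t \<theta>"
          using sat_exs_E[OF a1 a2] by blast
        have "\<not> sat M t \<psi>" using H[rule_format, of M t] a3 t by blast
        then show "\<not> sat M s \<psi>" using eq[OF t(2)] by simp
      qed
      then show ?thesis by (rule disjI2)
    qed
  qed
  have fvx: "fv_fm (exs us \<theta>) \<subseteq> set v" using fvt cov by (auto simp: fv_exs)
  have wfx: "wf_fm L (exs us \<theta>)" using wf by (simp add: wf_exs)
  show ?thesis unfolding complete_fm_def using wfx fvx real dec by blast
qed

definition wit :: "('a, 'f, 'r) struct \<Rightarrow> 'a \<Rightarrow> ('f, 'r) fm \<Rightarrow> nat \<Rightarrow> (nat \<Rightarrow> 'a) \<Rightarrow> 'a" where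
  "wit N d0 \<phi> n s = (if \<exists>a\<in>udom N. sat N (s(n:=a)) \<phi> then SOME a. a \<in> udom N \<and> sat N (s(n:=a)) \<phi> else d0)"

lemma LS:
  fixes L :: "('f :: countable, 'r :: countable) lang" and N :: "('a, 'f, 'r) struct"
  assumes X: "X \<subseteq> udom N" "countable X" "X \<noteq> {}"
  shows "\<exists>D. X \<subseteq> D \<and> D \<subseteq> udom N \<and> countable D \<and> TVc L N D"
proof -
  obtain d0 where d0: "d0 \<in> X" using X by auto
  define Wf where "Wf = (\<lambda>E. (\<lambda>(\<phi>, n, l). wit N d0 \<phi> n (sl l d0)) ` (UNIV \<times> UNIV \<times> lists E))"
  define stp where "stp = (\<lambda>E. E \<union> Wf E)"
  define Dk where "Dk = (\<lambda>k. (stp ^^ k) X)"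
  define D where "D = (\<Union>k. Dk k)"
  have witN: "wit N d0 \<phi> n s \<in> udom N" for \<phi> n s
  proof (cases "\<exists>a\<in>udom N. sat N (s(n:=a)) \<phi>")
    case True
    then have "\<exists>a. a \<in> udom N \<and> sat N (s(n:=a)) \<phi>" by blast
    then have "(SOME a. a \<in> udom N \<and> sat N (s(n:=a)) \<phi>) \<in> udom N" by (rule someI2_ex) blast
    with True show ?thesis unfolding wit_def by simp
  next
    case False
    then show ?thesis unfolding wit_def using d0 X by auto
  qed
  have WfN: "Wf E \<subseteq> udom N" for E unfolding Wf_def using witN by auto
  have DkS: "Dk (Suc k) = Dk k \<union> Wf (Dk k)" for k by (simp add: Dk_def stp_def)
  have Dk0: "Dk 0 = X" by (simp add: Dk_def)
  have DkN: "Dk k \<subseteq> udom N" for k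
  proof (induction k)
    case 0 then show ?case using Dk0 X by simp
  next
    case (Suc k) then show ?case using DkS WfN by simp
  qed
  have Dkc: "countable (Dk k)" for k
  proof (induction k)
    case 0 then show ?case using X by (simp add: Dk_def)
  next
    case (Suc k)
    have cl: "countable (lists (Dk k))" using Suc by (rule countable_lists)
    have c2: "countable (UNIV \<times> lists (Dk k) :: (nat \<times> 'a list) set)"
      by (rule countable_SIGMA[OF countableI_type cl])
    have "countable (UNIV \<times> UNIV \<times> lists (Dk k) :: (('f, 'r) fm \<times> nat \<times> 'a list) set)"
      by (rule countable_SIGMA[OF countableI_type c2])
    then have "countable (Wf (Dk k))" unfolding Wf_def by simp
    then show ?case using Suc DkS by simp
  qed
  have mono1: "Dk k \<subseteq> Dk (Suc k)" for k using DkS by simp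
  have mono: "k \<le> k' \<Longrightarrow> Dk k \<subseteq> Dk k'" for k k' by (rule lift_Suc_mono_le[of Dk, OF mono1])
  have cover: "\<exists>k. \<forall>v<K. s v \<in> Dk k" if rs: "range s \<subseteq> D" for s :: "nat \<Rightarrow> 'a" and K
  proof (induction K)
    case 0 then show ?case by simp
  next
    case (Suc K)
    then obtain k1 where k1: "\<forall>v<K. s v \<in> Dk k1" by blast
    obtain k2 where k2: "s K \<in> Dk k2" using rs unfolding D_def by auto
    have "\<forall>v<Suc K. s v \<in> Dk (max k1 k2)"
      using k1 k2 mono[of k1 "max k1 k2"] mono[of k2 "max k1 k2"] by (auto simp: less_Suc_eq)
    then show ?case by blast
  qed
  have tv: "TVc L N D" unfolding TVc_def
  proof (intro allI impI)
    fix \<phi> n s assume h: "wf_fm L \<phi> \<and> range s \<subseteq> D \<and> (\<exists>a\<in>udom N. sat N (s(n := a)) \<phi>)"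
    define K where "K = fresh (insert n (fv_fm \<phi>))"
    have Kgt: "v \<in> fv_fm \<phi> \<Longrightarrow> v < K" for v unfolding K_def by (rule fresh_gt) (auto simp: finite_fv_fm)
    have Kn: "n < K" unfolding K_def by (rule fresh_gt) (auto simp: finite_fv_fm)
    obtain k where k: "\<forall>v<K. s v \<in> Dk k" using cover h by blast
    define l where "l = map s [0..<K]"
    have l: "l \<in> lists (Dk k)" using k unfolding l_def by auto
    define s' where "s' = sl l d0"
    have agree: "(s'(n:=a)) v = (s(n:=a)) v" if "v \<in> fv_fm \<phi>" for v a
      using Kgt[OF that] unfolding s'_def sl_def l_def by auto
    have eqs: "sat N (s'(n:=a)) \<phi> = sat N (s(n:=a)) \<phi>" for a by (rule sat_cong) (rule agree)
    have ex: "\<exists>a\<in>udom N. sat N (s'(n:=a)) \<phi>" using h eqs by auto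
    define a where "a = wit N d0 \<phi> n s'"
    have ex2: "\<exists>a. a \<in> udom N \<and> sat N (s'(n:=a)) \<phi>" using ex by blast
    have a: "a \<in> udom N \<and> sat N (s'(n:=a)) \<phi>" unfolding a_def wit_def using ex someI_ex[OF ex2] by simp
    have "a \<in> Wf (Dk k)" unfolding Wf_def a_def s'_def
      by (rule image_eqI[where x="(\<phi>, n, l)"]) (use l in auto)
    then have "a \<in> Dk (Suc k)" using DkS by simp
    then have "a \<in> D" unfolding D_def by blast
    then show "\<exists>a\<in>D. sat N (s(n := a)) \<phi>" using a eqs by blast
  qed
  have "X \<subseteq> D" unfolding D_def using Dk0 by blast
  moreover have "D \<subseteq> udom N" unfolding D_def using DkN by blast
  moreover have "countable D" unfolding D_def using Dkc by blast
  ultimately show ?thesis using tv by blast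
qed

lemma map_evalt_Var: "map (evalt F s) (map Var xs) = map s xs"
  by (induction xs) auto

lemma fint_elem:
  fixes L :: "('f, 'r) lang" and M M' :: "('a, 'f, 'r) struct"
  assumes Ms: "is_struct L M" and el: "\<forall>\<phi> s. wf_fm L \<phi> \<and> range s \<subseteq> udom M \<longrightarrow> (sat M s \<phi> \<longleftrightarrow> sat M' (f \<circ> s) \<phi>)"
    and F: "fst L F = Some (length as)" and as: "set as \<subseteq> udom M"
  shows "fint M' F (map f as) = f (fint M F as)"
proof -
  let ?n = "length as"
  define c where "c = fint M F as"
  have c: "c \<in> udom M" using Ms F as unfolding is_struct_def c_def by blast
  define s where "s = (sl as c)(?n := c)"
  have rs: "range s \<subseteq> udom M" using as c unfolding s_def sl_def by auto
  let ?\<phi> = "Eq (Var ?n) (Fn F (map Var [0..<?n])) :: ('f, 'r) fm"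
  have wf: "wf_fm L ?\<phi>" using F by simp
  have m1: "map s [0..<?n] = as" unfolding s_def using map_sl[of as c] by simp
  have m2: "map (f \<circ> s) [0..<?n] = map f as" using m1 by (metis map_map)
  have sn: "s ?n = c" unfolding s_def by simp
  have "sat M s ?\<phi>" by (simp only: sat.simps evalt.simps map_evalt_Var m1 sn c_def)
  then have "sat M' (f \<circ> s) ?\<phi>" using el wf rs by blast
  then have "(f \<circ> s) ?n = fint M' F (map (f \<circ> s) [0..<?n])" by (simp only: sat.simps evalt.simps map_evalt_Var)
  then have "f c = fint M' F (map (f \<circ> s) [0..<?n])" using sn by simp
  then show ?thesis using m2 c_def by simp
qed

lemma rint_elem:
  fixes L :: "('f, 'r) lang" and M M' :: "('a, 'f, 'r) struct"
  assumes Ms: "is_struct L M" and el: "\<forall>\<phi> s. wf_fm L \<phi> \<and> range s \<subseteq> udom M \<longrightarrow> (sat M s \<phi> \<longleftrightarrow> sat M' (f \<circ> s) \<phi>)"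
    and R: "snd L R = Some (length as)" and as: "set as \<subseteq> udom M"
  shows "rint M' R (map f as) = rint M R as"
proof -
  let ?n = "length as"
  obtain c where c: "c \<in> udom M" using Ms unfolding is_struct_def by auto
  define s where "s = sl as c"
  have rs: "range s \<subseteq> udom M" using as c unfolding s_def sl_def by auto
  let ?\<phi> = "Rel R (map Var [0..<?n]) :: ('f, 'r) fm"
  have wf: "wf_fm L ?\<phi>" using R by simp
  have m1: "map s [0..<?n] = as" unfolding s_def using map_sl[of as c] by simp
  have m2: "map (f \<circ> s) [0..<?n] = map f as" using m1 by (metis map_map)
  have "sat M s ?\<phi> = sat M' (f \<circ> s) ?\<phi>" using el wf rs by blast
  then show ?thesis by (simp only: sat.simps evalt.simps map_evalt_Var m1 m2)
qed

lemma pullback: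
  fixes L :: "('f, 'r) lang" and M M' N' :: "('a, 'f, 'r) struct"
  assumes Twf: "\<forall>\<phi>\<in>T. wf_fm L \<phi>" and M: "cam L T M" and M'N': "elem_sub L M' N'"
    and N': "cam L T N'"
    and fM: "\<forall>a\<in>udom M. f a \<in> udom M'"
    and el: "\<forall>\<phi> s. wf_fm L \<phi> \<and> range s \<subseteq> udom M \<longrightarrow> (sat M s \<phi> \<longleftrightarrow> sat M' (f \<circ> s) \<phi>)"
    and unc: "uncountable (UNIV :: 'a set)"
  shows "\<exists>N h. atomic_model L T N \<and> elem_sub L M N \<and> (\<forall>a\<in>udom N'. h a \<in> udom N)
     \<and> (\<forall>a\<in>udom N' - udom M'. h a \<notin> udom M) \<and> (\<forall>a\<in>udom M. h (f a) = a)
     \<and> (\<forall>\<phi> t. wf_fm L \<phi> \<and> range t \<subseteq> udom N' \<longrightarrow> (sat N (h \<circ> t) \<phi> \<longleftrightarrow> sat N' t \<phi>))"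
proof -
  have Mat: "atomic_model L T M" and Mc: "countable (udom M)" using M unfolding cam_def by auto
  have Ms: "is_struct L M" using models_struct[OF atomic_models[OF Mat]] .
  have N'at: "atomic_model L T N'" and N'c: "countable (udom N')" using N' unfolding cam_def by auto
  have N's: "is_struct L N'" using models_struct[OF atomic_models[OF N'at]] .
  have M'N'sub: "udom M' \<subseteq> udom N'" using M'N' by (rule elem_sub_struct)
  have injf: "inj_on f (udom M)" using el by (rule elem_inj)
  define R where "R = udom N' - f ` udom M"
  have Rc: "countable R" unfolding R_def using N'c by auto
  have "uncountable (UNIV - udom M)" using unc Mc by (rule uncountable_minus_countable)
  then have "infinite (UNIV - udom M)" using countable_finite by blast
  then obtain g0 :: "nat \<Rightarrow> 'a" where g0: "inj g0" "range g0 \<subseteq> UNIV - udom M"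
    using infinite_countable_subset by blast
  define j where "j = g0 \<circ> to_nat_on R"
  have injj: "inj_on j R" unfolding j_def using inj_on_to_nat_on[OF Rc] g0(1)
    by (simp add: comp_inj_on inj_on_subset)
  have jout: "j x \<notin> udom M" for x using g0(2) unfolding j_def by auto
  define h where "h = (\<lambda>x. if x \<in> f ` udom M then inv_into (udom M) f x else j x)"
  have hf: "a \<in> udom M \<Longrightarrow> h (f a) = a" for a unfolding h_def using injf by (simp add: inv_into_f_f)
  have hR: "x \<in> R \<Longrightarrow> h x = j x" for x unfolding h_def R_def by auto
  have injh: "inj_on h (udom N')"
  proof
    fix x y assume xy: "x \<in> udom N'" "y \<in> udom N'" "h x = h y"
    show "x = y"
    proof (cases "x \<in> f ` udom M"; cases "y \<in> f ` udom M")
      assume "x \<in> f ` udom M" "y \<in> f ` udom M"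
      then show ?thesis using xy hf by auto
    next
      assume a: "x \<in> f ` udom M" "y \<notin> f ` udom M"
      then have "h x \<in> udom M" using hf by auto
      moreover have "h y = j y" using a xy by (intro hR) (auto simp: R_def)
      ultimately show ?thesis using xy jout by simp
    next
      assume a: "x \<notin> f ` udom M" "y \<in> f ` udom M"
      then have "h y \<in> udom M" using hf by auto
      moreover have "h x = j x" using a xy by (intro hR) (auto simp: R_def)
      ultimately show ?thesis using xy jout by simp
    next
      assume a: "x \<notin> f ` udom M" "y \<notin> f ` udom M"
      then have "x \<in> R" "y \<in> R" using xy unfolding R_def by auto
      then show ?thesis using xy hR injj by (metis inj_onD)
    qed
  qed
  define g where "g = inv_into (udom N') h"
  have gh: "x \<in> udom N' \<Longrightarrow> g (h x) = x" for x unfolding g_def using injh by (simp add: inv_into_f_f)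
  have gN': "y \<in> h ` udom N' \<Longrightarrow> g y \<in> udom N'" for y unfolding g_def by (simp add: inv_into_into)
  have hg: "y \<in> h ` udom N' \<Longrightarrow> h (g y) = y" for y unfolding g_def by (simp add: f_inv_into_f)
  define N where "N = \<lparr>udom = h ` udom N', fint = (\<lambda>F as. h (fint N' F (map g as))), rint = (\<lambda>R as. rint N' R (map g as))\<rparr>"
  have Nd[simp]: "udom N = h ` udom N'" unfolding N_def by simp
  have Nf: "fint N F as = h (fint N' F (map g as))" for F as unfolding N_def by simp
  have Nr: "rint N R as = rint N' R (map g as)" for R as unfolding N_def by simp
  have ev: "wf_trm L tm \<Longrightarrow> range t \<subseteq> udom N' \<Longrightarrow> evalt (fint N) (h \<circ> t) tm = h (evalt (fint N') t tm)" for tm t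
  proof (induction tm)
    case (Var n) then show ?case by simp
  next
    case (Fn F ts)
    have "map (evalt (fint N) (h \<circ> t)) ts = map (\<lambda>x. h (evalt (fint N') t x)) ts"
      using Fn by (auto simp: comp_def)
    moreover have "map g (map (\<lambda>x. h (evalt (fint N') t x)) ts) = map (evalt (fint N') t) ts"
      using Fn.prems evalt_in[OF N's] gh by (auto simp: map_eq_conv)
    ultimately have mm: "map g (map (evalt (fint N) (h \<circ> t)) ts) = map (evalt (fint N') t) ts" by simp
    have "evalt (fint N) (h \<circ> t) (Fn F ts) = fint N F (map (evalt (fint N) (h \<circ> t)) ts)" by (simp only: evalt.simps)
    also have "\<dots> = h (fint N' F (map g (map (evalt (fint N) (h \<circ> t)) ts)))" by (rule Nf)
    also have "\<dots> = h (fint N' F (map (evalt (fint N') t) ts))" by (simp only: mm)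
    finally show ?case by (simp only: evalt.simps)
  qed
  have sat_iso: "wf_fm L \<phi> \<Longrightarrow> range t \<subseteq> udom N' \<Longrightarrow> sat N (h \<circ> t) \<phi> = sat N' t \<phi>" for \<phi> t
  proof (induction \<phi> arbitrary: t)
    case (Eq u v)
    have "evalt (fint N') t u \<in> udom N'" "evalt (fint N') t v \<in> udom N'"
      using Eq evalt_in[OF N's] by auto
    moreover have "evalt (fint N) (h \<circ> t) u = h (evalt (fint N') t u)" using Eq by (intro ev) auto
    moreover have "evalt (fint N) (h \<circ> t) v = h (evalt (fint N') t v)" using Eq by (intro ev) auto
    ultimately show ?case using injh by (simp only: sat.simps inj_on_eq_iff)
  next
    case (Rel R ts)
    have "map g (map (evalt (fint N) (h \<circ> t)) ts) = map (evalt (fint N') t) ts"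
      using Rel ev gh evalt_in[OF N's] by (auto simp: map_eq_conv)
    then show ?case by (simp only: sat.simps Nr)
  next
    case (Neg \<phi>) then show ?case by simp
  next
    case (Conj \<phi> \<psi>) then show ?case by simp
  next
    case (Ex n \<phi>)
    have eq: "(h \<circ> t)(n := h b) = h \<circ> (t(n:=b))" for b by (auto simp: fun_eq_iff)
    have IH': "sat N (h \<circ> (t(n:=b))) \<phi> = sat N' (t(n:=b)) \<phi>" if b: "b \<in> udom N'" for b
    proof (rule Ex.IH)
      show "wf_fm L \<phi>" using Ex.prems by simp
      show "range (t(n:=b)) \<subseteq> udom N'" using Ex.prems b by auto
    qed
    have "sat N (h \<circ> t) (Ex n \<phi>) = (\<exists>a\<in>h ` udom N'. sat N ((h \<circ> t)(n := a)) \<phi>)" by (simp only: sat.simps Nd)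
    also have "\<dots> = (\<exists>b\<in>udom N'. sat N ((h \<circ> t)(n := h b)) \<phi>)" by blast
    also have "\<dots> = (\<exists>b\<in>udom N'. sat N (h \<circ> (t(n := b))) \<phi>)" by (simp only: eq)
    also have "\<dots> = (\<exists>b\<in>udom N'. sat N' (t(n := b)) \<phi>)" using IH' by blast
    finally show ?case by (simp only: sat.simps)
  qed
  have sat_gen: "wf_fm L \<phi> \<Longrightarrow> range s \<subseteq> udom N \<Longrightarrow> sat N s \<phi> = sat N' (g \<circ> s) \<phi>" for \<phi> s
  proof -
    assume a: "wf_fm L \<phi>" "range s \<subseteq> udom N"
    have r: "range (g \<circ> s) \<subseteq> udom N'" using a gN' by auto
    have "h \<circ> (g \<circ> s) = s" using a hg by (auto simp: fun_eq_iff)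
    then show ?thesis using sat_iso[OF a(1) r] by simp
  qed
  have Ns: "is_struct L N" unfolding is_struct_def
  proof (intro conjI allI impI)
    show "udom N \<noteq> {}" using N's unfolding is_struct_def by simp
  next
    fix F n as assume a: "fst L F = Some n \<and> length as = n \<and> set as \<subseteq> udom N"
    then have "set (map g as) \<subseteq> udom N'" using gN' by auto
    then have "fint N' F (map g as) \<in> udom N'" using a N's unfolding is_struct_def by auto
    then show "fint N F as \<in> udom N" by (simp add: Nf)
  qed
  have gM: "a \<in> udom M \<Longrightarrow> g a = f a" for a using gh[of "f a"] hf fM M'N'sub by auto
  have MN: "udom M \<subseteq> udom N"
  proof
    fix a assume a: "a \<in> udom M"
    then have "f a \<in> udom N'" using fM M'N'sub by auto
    then show "a \<in> udom N" using hf[OF a] by (metis Nd imageI)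
  qed
  have fint_eq: "fint M F as = fint N F as" if a: "fst L F = Some n \<and> length as = n \<and> set as \<subseteq> udom M" for F n as
  proof -
    have mg: "map g as = map f as" using a gM by auto
    have fs: "set (map f as) \<subseteq> udom M'" using a fM by auto
    have "fint N' F (map f as) = fint M' F (map f as)" using M'N' fs a unfolding elem_sub_def by auto
    also have "\<dots> = f (fint M F as)" using fint_elem[OF Ms el] a by auto
    finally have "fint N F as = h (f (fint M F as))" by (simp add: Nf mg)
    moreover have "fint M F as \<in> udom M" using Ms a unfolding is_struct_def by blast
    ultimately show ?thesis using hf by simp
  qed
  have rint_eq: "rint M R as = rint N R as" if a: "snd L R = Some n \<and> length as = n \<and> set as \<subseteq> udom M" for R n as
  proof -
    have mg: "map g as = map f as" using a gM by auto
    have fs: "set (map f as) \<subseteq> udom M'" using a fM by auto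
    have "rint N' R (map f as) = rint M' R (map f as)" using M'N' fs a unfolding elem_sub_def by auto
    also have "\<dots> = rint M R as" using rint_elem[OF Ms el] a by auto
    finally show ?thesis by (simp add: Nr mg)
  qed
  have sat_eq: "sat M s \<phi> = sat N s \<phi>" if a: "wf_fm L \<phi> \<and> range s \<subseteq> udom M" for \<phi> s
  proof -
    have r1: "range (f \<circ> s) \<subseteq> udom M'" using a fM by auto
    have r2: "range (f \<circ> s) \<subseteq> udom N'" using r1 M'N'sub by auto
    have hfs: "h \<circ> (f \<circ> s) = s" using a hf by (auto simp: fun_eq_iff)
    have "sat M s \<phi> = sat M' (f \<circ> s) \<phi>" using el a by blast
    also have "\<dots> = sat N' (f \<circ> s) \<phi>" using elem_sub_sat[OF M'N'] a r1 by blast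
    also have "\<dots> = sat N (h \<circ> (f \<circ> s)) \<phi>" using sat_iso a r2 by blast
    finally show ?thesis using hfs by simp
  qed
  have es: "elem_sub L M N" unfolding elem_sub_def using Ms Ns MN fint_eq rint_eq sat_eq by blast
  have Nm: "models L T N" unfolding models_def
  proof (intro conjI ballI allI impI)
    show "is_struct L N" by (rule Ns)
  next
    fix \<phi> and s :: "nat \<Rightarrow> 'a" assume a: "\<phi> \<in> T" "range s \<subseteq> udom N"
    have "range (g \<circ> s) \<subseteq> udom N'" using a gN' by auto
    then have "sat N' (g \<circ> s) \<phi>" using a N'at unfolding atomic_model_def models_def by blast
    then show "sat N s \<phi>" using sat_gen a Twf by blast
  qed
  have Nat: "atomic_model L T N" unfolding atomic_model_def
  proof (intro conjI allI impI)
    show "models L T N" by (rule Nm)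
  next
    fix w :: "nat list" and s :: "nat \<Rightarrow> 'a" assume a: "distinct w \<and> range s \<subseteq> udom N"
    have "range (g \<circ> s) \<subseteq> udom N'" using a gN' by auto
    then obtain \<chi> where chi: "complete_fm TYPE('a) L T w \<chi>" "sat N' (g \<circ> s) \<chi>"
      using a N'at unfolding atomic_model_def by blast
    have "wf_fm L \<chi>" using chi unfolding complete_fm_def by blast
    then show "\<exists>\<theta>. complete_fm TYPE('a) L T w \<theta> \<and> sat N s \<theta>" using chi sat_gen a by blast
  qed
  have c1: "\<forall>a\<in>udom N'. h a \<in> udom N" by simp
  have c2: "\<forall>a\<in>udom N' - udom M'. h a \<notin> udom M"
  proof (intro ballI)
    fix a assume a: "a \<in> udom N' - udom M'"
    then have "a \<notin> f ` udom M" using fM by auto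
    then have "a \<in> R" using a unfolding R_def by auto
    then show "h a \<notin> udom M" using hR jout by simp
  qed
  show ?thesis using Nat es c1 c2 hf sat_iso by blast
qed

lemma restr_complete:
  fixes U :: "'a itself" and L :: "('f, 'r) lang"
  assumes c: "complete_fm U L T w \<theta>" and sv: "set v \<subseteq> set w"
  shows "complete_fm U L T v (restr w v \<theta>)"
  unfolding restr_def by (rule complete_exs[OF c sv]) auto

lemma fv_complete: "complete_fm U L T w \<theta> \<Longrightarrow> fv_fm \<theta> \<subseteq> set w"
  and wf_complete: "complete_fm U L T w \<theta> \<Longrightarrow> wf_fm L \<theta>"
  unfolding complete_fm_def by blast+

lemma cam_models: "cam L T M \<Longrightarrow> models L T M"
  by (rule atomic_models[OF cam_atomic])

lemma part1_lemma:
  fixes L :: "('f, 'r) lang" and U :: "'a itself" and M :: "('a, 'f, 'r) struct"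
  assumes Twf: "\<forall>\<phi>\<in>T. wf_fm L \<phi>" and c: "complete_fm U L T (z @ x) \<theta>"
    and ext: "extendible U L T z x \<theta>" and M: "cam L T M" and rs: "range s \<subseteq> udom M" and st: "sat M s \<theta>"
  shows "\<exists>M0. cam L T M0 \<and> elem_sub L M0 M \<and> s ` set z \<subseteq> udom M0 \<and> s ` set x \<inter> udom M0 = {}"
proof -
  obtain M' N' :: "('a, 'f, 'r) struct" and s' where w: "cam L T M'" "cam L T N'" "elem_sub L M' N'"
    "range s' \<subseteq> udom N'" "s' ` set z \<subseteq> udom M'" "s' ` set x \<inter> udom M' = {}" "sat N' s' \<theta>"
    using ext unfolding extendible_def by (elim exE conjE) (rule that; assumption)
  have te: "teq L N' s' M s (set (z @ x))" unfolding teq_def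
  proof (intro allI impI)
    fix \<phi> assume \<phi>: "wf_fm L \<phi> \<and> fv_fm \<phi> \<subseteq> set (z @ x)"
    show "sat N' s' \<phi> = sat M s \<phi>"
      by (rule complete_fm_same[OF c]) (use \<phi> w cam_models[OF w(2)] cam_models[OF M] rs st in auto)
  qed
  obtain M0 where M0: "cam L T M0" "elem_sub L M0 M"
    "\<forall>v\<in>set (z @ x). s' v \<in> udom M' \<longrightarrow> s v \<in> udom M0"
    "\<forall>v\<in>set (z @ x). s' v \<notin> udom M' \<longrightarrow> s v \<notin> udom M0"
    using shrink[OF Twf w(2) w(3) cam_countable[OF w(1)] M _ w(4) rs te] by blast
  have "s ` set z \<subseteq> udom M0" using M0(3) w(5) by auto
  moreover have "s ` set x \<inter> udom M0 = {}" using M0(4) w(6) by auto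
  ultimately show ?thesis using M0 by blast
qed

lemma part2_lemma:
  fixes L :: "('f, 'r) lang" and U :: "'a itself"
  assumes ext: "extendible U L T z x \<theta>" and sz: "subseq z' z" and sx: "subseq x' x"
  shows "extendible U L T z' x' (restr (z @ x) (z' @ x') \<theta>)"
proof -
  obtain M N :: "('a, 'f, 'r) struct" and s where w: "cam L T M" "cam L T N" "elem_sub L M N"
    "range s \<subseteq> udom N" "s ` set z \<subseteq> udom M" "s ` set x \<inter> udom M = {}" "sat N s \<theta>"
    using ext unfolding extendible_def by (elim exE conjE) (rule that; assumption)
  have z: "set z' \<subseteq> set z" using sz by (auto elim: list_emb_set)
  have x: "set x' \<subseteq> set x" using sx by (auto elim: list_emb_set)
  have "sat N s (restr (z @ x) (z' @ x') \<theta>)" unfolding restr_def using w(4,7) by (rule sat_exs_self)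
  moreover have "s ` set z' \<subseteq> udom M" using w(5) z by auto
  moreover have "s ` set x' \<inter> udom M = {}" using w(6) x by auto
  ultimately show ?thesis unfolding extendible_def using w by blast
qed

lemma part3a_lemma:
  fixes L :: "('f, 'r) lang" and U :: "'a itself"
  assumes Twf: "\<forall>\<phi>\<in>T. wf_fm L \<phi>" and uncU: "uncountable (UNIV :: 'a set)"
    and po: "partition_ok z x \<theta>" and c: "complete_fm U L T (z @ x) \<theta>"
    and ext: "extendible U L T z x \<theta>" and xi: "xi \<in> set x"
  shows "\<not> pseudo_alg U L T z xi (restr (z @ x) (z @ [xi]) \<theta>)"
proof
  define \<psi> where "\<psi> = restr (z @ x) (z @ [xi]) \<theta>"
  assume "pseudo_alg U L T z xi (restr (z @ x) (z @ [xi]) \<theta>)"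
  then have pa0: "pseudo_alg U L T z xi \<psi>" unfolding \<psi>_def .
  obtain M :: "('a, 'f, 'r) struct" and s where pa: "cam L T M" "range s \<subseteq> udom M" "sat M s (Ex xi \<psi>)"
    "\<forall>N :: ('a, 'f, 'r) struct. atomic_model L T N \<and> elem_sub L M N \<and> udom N \<noteq> udom M \<longrightarrow>
           {c \<in> udom N. sat N (s(xi := c)) \<psi>} = {c \<in> udom M. sat M (s(xi := c)) \<psi>}"
    using pa0 unfolding pseudo_alg_def by (elim exE conjE) (rule that; assumption)
  obtain M' N' :: "('a, 'f, 'r) struct" and s' where w: "cam L T M'" "cam L T N'" "elem_sub L M' N'"
    "range s' \<subseteq> udom N'" "s' ` set z \<subseteq> udom M'" "s' ` set x \<inter> udom M' = {}" "sat N' s' \<theta>"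
    using ext unfolding extendible_def by (elim exE conjE) (rule that; assumption)
  have dist: "distinct (z @ x)" using po unfolding partition_ok_def by blast
  have xiz: "xi \<notin> set z" using dist xi by auto
  have c\<psi>: "complete_fm U L T (z @ [xi]) \<psi>" unfolding \<psi>_def by (rule restr_complete[OF c]) (use xi in auto)
  have cE: "complete_fm U L T z (exs [xi] \<psi>)" by (rule complete_exs[OF c\<psi>]) (use xiz in auto)
  have exs1: "exs [xi] \<psi> = Ex xi \<psi>" by simp
  have fvE: "fv_fm (Ex xi \<psi>) \<subseteq> set z" using fv_complete[OF cE] by simp
  have wf\<psi>: "wf_fm L \<psi>" using wf_complete[OF c\<psi>] .
  have fv\<psi>: "fv_fm \<psi> \<subseteq> set (z @ [xi])" using fv_complete[OF c\<psi>] .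
  have M's: "is_struct L M'" using w(3) by (rule elem_sub_struct)
  obtain d' where d': "d' \<in> udom M'" using M's unfolding is_struct_def by auto
  define s'' where "s'' = (\<lambda>v. if v \<in> set z then s' v else d')"
  have rs'': "range s'' \<subseteq> udom M'" using w(5) d' unfolding s''_def by auto
  have s'\<psi>: "sat N' s' \<psi>" unfolding \<psi>_def restr_def using w(4,7) by (rule sat_exs_self)
  have "sat N' s' (Ex xi \<psi>)" using sat_exs_self[OF w(4) s'\<psi>, of "[xi]"] by simp
  moreover have "sat N' s' (Ex xi \<psi>) = sat N' s'' (Ex xi \<psi>)"
    by (rule sat_cong) (use fvE in \<open>auto simp: s''_def\<close>)
  ultimately have "sat N' s'' (Ex xi \<psi>)" by simp
  moreover have "sat M' s'' (Ex xi \<psi>) = sat N' s'' (Ex xi \<psi>)"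
    by (rule elem_sub_sat[OF w(3) _ rs'']) (simp add: wf\<psi>)
  ultimately have sM': "sat M' s'' (Ex xi \<psi>)" by simp
  have te: "teq L M s M' s'' (set z)" unfolding teq_def
  proof (intro allI impI)
    fix \<phi> assume \<phi>: "wf_fm L \<phi> \<and> fv_fm \<phi> \<subseteq> set z"
    show "sat M s \<phi> = sat M' s'' \<phi>"
      by (rule complete_fm_same[OF cE]) (use \<phi> pa cam_models[OF pa(1)] cam_models[OF w(1)] rs'' sM' in auto)
  qed
  obtain f where fM: "\<forall>a\<in>udom M. f a \<in> udom M'" and fV: "\<forall>v\<in>set z. f (s v) = s'' v"
    and el: "\<forall>\<phi> t. wf_fm L \<phi> \<and> range t \<subseteq> udom M \<longrightarrow> (sat M t \<phi> \<longleftrightarrow> sat M' (f \<circ> t) \<phi>)"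
    using forth[OF pa(1) cam_models[OF w(1)] _ pa(2) rs'' te] by blast
  obtain N h where N: "atomic_model L T N" "elem_sub L M N" "\<forall>a\<in>udom N'. h a \<in> udom N"
    "\<forall>a\<in>udom N' - udom M'. h a \<notin> udom M" "\<forall>a\<in>udom M. h (f a) = a"
    "\<forall>\<phi> t. wf_fm L \<phi> \<and> range t \<subseteq> udom N' \<longrightarrow> (sat N (h \<circ> t) \<phi> \<longleftrightarrow> sat N' t \<phi>)"
    using pullback[OF Twf pa(1) w(3) w(2) fM el uncU] by blast
  define c where "c = h (s' xi)"
  have s'xi: "s' xi \<in> udom N' - udom M'" using w(4,6) xi by auto
  have cN: "c \<in> udom N" using N(3) s'xi unfolding c_def by blast
  have cM: "c \<notin> udom M" using N(4) s'xi unfolding c_def by blast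
  have "sat N (h \<circ> s') \<psi>" using N(6) wf\<psi> w(4) s'\<psi> by blast
  moreover have "sat N (h \<circ> s') \<psi> = sat N (s(xi := c)) \<psi>"
  proof (rule sat_cong)
    fix v assume v: "v \<in> fv_fm \<psi>"
    show "(h \<circ> s') v = (s(xi := c)) v"
    proof (cases "v = xi")
      case True then show ?thesis unfolding c_def by simp
    next
      case False
      then have vz: "v \<in> set z" using v fv\<psi> by auto
      have "s v \<in> udom M" using pa(2) by auto
      then have "h (f (s v)) = s v" using N(5) by blast
      moreover have "f (s v) = s' v" using fV vz unfolding s''_def by simp
      ultimately show ?thesis using False by simp
    qed
  qed
  ultimately have "c \<in> {c \<in> udom N. sat N (s(xi := c)) \<psi>}" using cN by simp
  moreover have "udom N \<noteq> udom M" using cN cM by blast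
  ultimately have "c \<in> {c \<in> udom M. sat M (s(xi := c)) \<psi>}" using pa(4) N(1,2) by blast
  then show False using cM by simp
qed

lemma realize_cam:
  fixes L :: "('f :: countable, 'r :: countable) lang" and U :: "'a itself"
  assumes compl: "complete_theory U L T"
    and unc: "\<exists>M :: ('a, 'f, 'r) struct. atomic_model L T M \<and> uncountable (udom M)"
    and c: "complete_fm U L T w \<theta>"
  shows "\<exists>(M0 :: ('a, 'f, 'r) struct) s0. cam L T M0 \<and> range s0 \<subseteq> udom M0 \<and> sat M0 s0 \<theta>"
proof -
  have Twf: "\<forall>\<phi>\<in>T. wf_fm L \<phi>" using compl unfolding complete_theory_def sentence_def by blast
  obtain Mu :: "('a, 'f, 'r) struct" where Mu: "atomic_model L T Mu" using unc by blast
  have Mum: "models L T Mu" using Mu by (rule atomic_models)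
  have Mus: "is_struct L Mu" using Mum by (rule models_struct)
  obtain u0 where u0: "u0 \<in> udom Mu" using Mus unfolding is_struct_def by auto
  obtain Mc :: "('a, 'f, 'r) struct" and sc where mc: "models L T Mc" "range sc \<subseteq> udom Mc" "sat Mc sc \<theta>"
    using c unfolding complete_fm_def by (elim exE conjE) (rule that; assumption)
  define \<sigma> where "\<sigma> = exs w \<theta>"
  have sen: "sentence L \<sigma>" unfolding sentence_def \<sigma>_def
    using wf_complete[OF c] fv_complete[OF c] by (auto simp: wf_exs fv_exs)
  have "sat Mc sc \<sigma>" unfolding \<sigma>_def using mc(2,3) by (rule sat_exs_self)
  then have all: "\<forall>(M :: ('a, 'f, 'r) struct) s. models L T M \<and> range s \<subseteq> udom M \<longrightarrow> sat M s \<sigma>"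
    using compl sen mc unfolding complete_theory_def by blast
  define t0 where "t0 = (\<lambda>_::nat. u0)"
  have rt0: "range t0 \<subseteq> udom Mu" using u0 unfolding t0_def by auto
  have "sat Mu t0 \<sigma>" using all Mum rt0 by blast
  then obtain t where t: "range t \<subseteq> udom Mu" "sat Mu t \<theta>" unfolding \<sigma>_def using sat_exs_E[OF rt0] by blast
  define X where "X = insert u0 (t ` set w)"
  have X: "X \<subseteq> udom Mu" "countable X" "X \<noteq> {}" using u0 t unfolding X_def by auto
  obtain D where D: "X \<subseteq> D" "D \<subseteq> udom Mu" "countable D" "TVc L Mu D" using LS[OF X] by blast
  define M0 where "M0 = Mu\<lparr>udom := D\<rparr>"
  have es: "elem_sub L M0 Mu" unfolding M0_def by (rule TV_lemma[OF Mus D(2) _ D(4)]) (use X D in auto)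
  have cam0: "cam L T M0" by (rule cam_sub[OF Twf es Mu]) (simp add: M0_def D(3))
  define s0 where "s0 = (\<lambda>v. if v \<in> set w then t v else u0)"
  have rs0: "range s0 \<subseteq> udom M0" using D(1) unfolding s0_def M0_def X_def by auto
  have "sat Mu t \<theta> = sat Mu s0 \<theta>" by (rule sat_cong) (use fv_complete[OF c] in \<open>auto simp: s0_def\<close>)
  then have "sat Mu s0 \<theta>" using t by simp
  then have "sat M0 s0 \<theta>" using elem_sub_sat[OF es wf_complete[OF c] rs0] by simp
  then show ?thesis using cam0 rs0 by blast
qed

lemma part3b_lemma:
  fixes L :: "('f :: countable, 'r :: countable) lang" and U :: "'a itself"
  assumes compl: "complete_theory U L T"
    and unc: "\<exists>M :: ('a, 'f, 'r) struct. atomic_model L T M \<and> uncountable (udom M)"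
    and po: "partition_ok z x \<theta>" and c: "complete_fm U L T (z @ x) \<theta>"
    and npa: "\<forall>xi\<in>set x. \<not> pseudo_alg U L T z xi (restr (z @ x) (z @ [xi]) \<theta>)"
  shows "extendible U L T z x \<theta>"
proof -
  have Twf: "\<forall>\<phi>\<in>T. wf_fm L \<phi>" using compl unfolding complete_theory_def sentence_def by blast
  obtain M0 :: "('a, 'f, 'r) struct" and s0 where m0: "cam L T M0" "range s0 \<subseteq> udom M0" "sat M0 s0 \<theta>"
    using realize_cam[OF compl unc c] by blast
  have dist: "distinct (z @ x)" using po unfolding partition_ok_def by blast
  have M0s: "is_struct L M0" using cam_models[OF m0(1)] by (rule models_struct)
  have claim: "J \<subseteq> set x \<Longrightarrow> \<exists>M' :: ('a, 'f, 'r) struct. cam L T M' \<and> elem_sub L M' M0 \<and>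
      s0 ` set z \<subseteq> udom M' \<and> s0 ` J \<inter> udom M' = {}" if fin: "finite J" for J
    using fin
  proof (induction J rule: finite_induct)
    case empty
    then show ?case using m0 elem_sub_refl[OF M0s] by blast
  next
    case (insert j J)
    then obtain M1 :: "('a, 'f, 'r) struct" where M1: "cam L T M1" "elem_sub L M1 M0"
      "s0 ` set z \<subseteq> udom M1" "s0 ` J \<inter> udom M1 = {}" by blast
    have jx: "j \<in> set x" using insert by auto
    have jz: "j \<notin> set z" using dist jx by auto
    show ?case
    proof (cases "s0 j \<in> udom M1")
      case False
      then show ?thesis using M1 by blast
    next
      case True
      define \<psi> where "\<psi> = restr (z @ x) (z @ [j]) \<theta>"
      have c\<psi>: "complete_fm U L T (z @ [j]) \<psi>" unfolding \<psi>_def by (rule restr_complete[OF c]) (use jx in auto)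
      have wf\<psi>: "wf_fm L \<psi>" using wf_complete[OF c\<psi>] .
      have fv\<psi>: "fv_fm \<psi> \<subseteq> set (z @ [j])" using fv_complete[OF c\<psi>] .
      have M1s: "is_struct L M1" using M1(2) by (rule elem_sub_struct)
      have M1M0: "udom M1 \<subseteq> udom M0" using M1(2) by (rule elem_sub_struct)
      obtain d where d: "d \<in> udom M1" using M1s unfolding is_struct_def by auto
      define s1 where "s1 = (\<lambda>v. if v \<in> set z \<or> v = j then s0 v else d)"
      have rs1: "range s1 \<subseteq> udom M1" using M1(3) True d unfolding s1_def by auto
      have "sat M0 s0 \<psi>" unfolding \<psi>_def restr_def using m0(2,3) by (rule sat_exs_self)
      moreover have "sat M0 s0 \<psi> = sat M0 s1 \<psi>" by (rule sat_cong) (use fv\<psi> in \<open>auto simp: s1_def\<close>)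
      moreover have "sat M1 s1 \<psi> = sat M0 s1 \<psi>" by (rule elem_sub_sat[OF M1(2) wf\<psi> rs1])
      ultimately have s1\<psi>: "sat M1 s1 \<psi>" by simp
      have s1j: "s1(j := s1 j) = s1" by simp
      have "s1 j \<in> udom M1" using rs1 by auto
      then have s1E: "sat M1 s1 (Ex j \<psi>)" using s1\<psi> s1j by (auto intro!: bexI[of _ "s1 j"])
      have "\<not> pseudo_alg U L T z j \<psi>" using npa jx unfolding \<psi>_def by blast
      then have "\<not> (\<forall>N :: ('a, 'f, 'r) struct. atomic_model L T N \<and> elem_sub L M1 N \<and> udom N \<noteq> udom M1 \<longrightarrow>
           {c \<in> udom N. sat N (s1(j := c)) \<psi>} = {c \<in> udom M1. sat M1 (s1(j := c)) \<psi>})"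
        using M1(1) rs1 s1E unfolding pseudo_alg_def by blast
      then obtain N :: "('a, 'f, 'r) struct" where N: "atomic_model L T N" "elem_sub L M1 N"
        "{c \<in> udom N. sat N (s1(j := c)) \<psi>} \<noteq> {c \<in> udom M1. sat M1 (s1(j := c)) \<psi>}" by blast
      have M1N: "udom M1 \<subseteq> udom N" using N(2) by (rule elem_sub_struct)
      have sub: "{c \<in> udom M1. sat M1 (s1(j := c)) \<psi>} \<subseteq> {c \<in> udom N. sat N (s1(j := c)) \<psi>}"
      proof
        fix c assume c: "c \<in> {c \<in> udom M1. sat M1 (s1(j := c)) \<psi>}"
        then have "range (s1(j := c)) \<subseteq> udom M1" using rs1 by auto
        then have "sat M1 (s1(j := c)) \<psi> = sat N (s1(j := c)) \<psi>" by (rule elem_sub_sat[OF N(2) wf\<psi>])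
        then show "c \<in> {c \<in> udom N. sat N (s1(j := c)) \<psi>}" using c M1N by auto
      qed
      then obtain c where cN: "c \<in> udom N" "sat N (s1(j := c)) \<psi>" and cM1': "c \<notin> {c \<in> udom M1. sat M1 (s1(j := c)) \<psi>}"
        using N(3) by blast
      have cM1: "c \<notin> udom M1"
      proof
        assume cm: "c \<in> udom M1"
        then have "range (s1(j := c)) \<subseteq> udom M1" using rs1 by auto
        then have "sat M1 (s1(j := c)) \<psi> = sat N (s1(j := c)) \<psi>" by (rule elem_sub_sat[OF N(2) wf\<psi>])
        then show False using cm cN cM1' by auto
      qed
      have Ns: "is_struct L N" using N(2) by (rule elem_sub_struct)
      have X: "insert c (udom M1) \<subseteq> udom N" "countable (insert c (udom M1))" "insert c (udom M1) \<noteq> {}"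
        using cN M1N cam_countable[OF M1(1)] by auto
      obtain D where D: "insert c (udom M1) \<subseteq> D" "D \<subseteq> udom N" "countable D" "TVc L N D" using LS[OF X] by blast
      define N0 where "N0 = N\<lparr>udom := D\<rparr>"
      have N0N: "elem_sub L N0 N" unfolding N0_def by (rule TV_lemma[OF Ns D(2) _ D(4)]) (use D in auto)
      have camN0: "cam L T N0" by (rule cam_sub[OF Twf N0N N(1)]) (simp add: N0_def D(3))
      have M1N0: "elem_sub L M1 N0" by (rule elem_sub_mid[OF N(2) N0N]) (use D in \<open>auto simp: N0_def\<close>)
      define sA where "sA = s1(j := c)"
      have rsA: "range sA \<subseteq> udom N0" using rs1 D(1) unfolding sA_def N0_def by auto
      have "sat N sA \<psi>" using cN unfolding sA_def by simp
      then have sA\<psi>: "sat N0 sA \<psi>" using elem_sub_sat[OF N0N wf\<psi> rsA] by simp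
      have te: "teq L N0 sA M1 s1 (set (z @ [j]))" unfolding teq_def
      proof (intro allI impI)
        fix \<phi> assume \<phi>: "wf_fm L \<phi> \<and> fv_fm \<phi> \<subseteq> set (z @ [j])"
        show "sat N0 sA \<phi> = sat M1 s1 \<phi>"
          by (rule complete_fm_same[OF c\<psi>]) (use \<phi> cam_models[OF camN0] rsA sA\<psi> cam_models[OF M1(1)] rs1 s1\<psi> in auto)
      qed
      obtain M2 where M2: "cam L T M2" "elem_sub L M2 M1"
        "\<forall>v\<in>set (z @ [j]). sA v \<in> udom M1 \<longrightarrow> s1 v \<in> udom M2"
        "\<forall>v\<in>set (z @ [j]). sA v \<notin> udom M1 \<longrightarrow> s1 v \<notin> udom M2"
        using shrink[OF Twf camN0 M1N0 cam_countable[OF M1(1)] M1(1) _ rsA rs1 te] by blast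
      have M2M1: "udom M2 \<subseteq> udom M1" using M2(2) by (rule elem_sub_struct)
      have "s0 ` set z \<subseteq> udom M2"
      proof
        fix y assume "y \<in> s0 ` set z"
        then obtain v where v: "v \<in> set z" "y = s0 v" by auto
        have "v \<noteq> j" using v jz by auto
        then have "sA v = s0 v" "s1 v = s0 v" using v unfolding sA_def s1_def by auto
        then have e: "sA v = s0 v" "s1 v = s0 v" .
        have "s0 v \<in> udom M1" using M1(3) v(1) by auto
        then have "sA v \<in> udom M1" using e by simp
        moreover have "v \<in> set (z @ [j])" using v(1) by simp
        ultimately have "s1 v \<in> udom M2" using M2(3) by blast
        then show "y \<in> udom M2" using e v(2) by simp
      qed
      moreover have "s0 j \<notin> udom M2"
      proof -
        have "sA j = c" "s1 j = s0 j" unfolding sA_def s1_def by auto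
        then show ?thesis using M2(4) cM1 by auto
      qed
      moreover have "s0 ` J \<inter> udom M2 = {}" using M1(4) M2M1 by auto
      moreover have "elem_sub L M2 M0" using elem_sub_trans[OF M2(2) M1(2)] .
      ultimately show ?thesis using M2(1) by blast
    qed
  qed
  obtain M' :: "('a, 'f, 'r) struct" where M': "cam L T M'" "elem_sub L M' M0"
      "s0 ` set z \<subseteq> udom M'" "s0 ` set x \<inter> udom M' = {}"
    using claim[of "set x"] by blast
  show ?thesis unfolding extendible_def using M' m0 by blast
qed

theorem fact3p2p3:
  fixes L :: "('f :: countable, 'r :: countable) lang"
    and T :: "('f, 'r) fm set"
    and U :: "'a itself"
  assumes compl: "complete_theory U L T"
    and unc: "\<exists>M :: ('a, 'f, 'r) struct. atomic_model L T M \<and> uncountable (udom M)"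
  shows
    "(\<forall>z x \<theta>. partition_ok z x \<theta> \<and> complete_fm U L T (z @ x) \<theta> \<and> extendible U L T z x \<theta> \<longrightarrow>
        (\<forall>(M :: ('a, 'f, 'r) struct) s. cam L T M \<and> range s \<subseteq> udom M \<and> sat M s \<theta> \<longrightarrow>
           (\<exists>M0. elem_sub L M0 M \<and> s ` set z \<subseteq> udom M0 \<and> s ` set x \<inter> udom M0 = {})))
   \<and> (\<forall>z x z' x' \<theta>. partition_ok z x \<theta> \<and> complete_fm U L T (z @ x) \<theta> \<and> extendible U L T z x \<theta>
        \<and> subseq z' z \<and> subseq x' x \<longrightarrow>
        extendible U L T z' x' (restr (z @ x) (z' @ x') \<theta>))
   \<and> (\<forall>z x \<theta>. partition_ok z x \<theta> \<and> complete_fm U L T (z @ x) \<theta> \<longrightarrow>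
        (extendible U L T z x \<theta> \<longleftrightarrow>
          (\<forall>xi\<in>set x. \<not> pseudo_alg U L T z xi (restr (z @ x) (z @ [xi]) \<theta>))))"
proof -
  have Twf: "\<forall>\<phi>\<in>T. wf_fm L \<phi>" using compl unfolding complete_theory_def sentence_def by blast
  obtain Mu :: "('a, 'f, 'r) struct" where Mu: "uncountable (udom Mu)" using unc by blast
  have uncU: "uncountable (UNIV :: 'a set)"
  proof
    assume "countable (UNIV :: 'a set)"
    then have "countable (udom Mu)" by (rule countable_subset[rotated]) simp
    then show False using Mu by simp
  qed
  have P1: "\<forall>z x \<theta>. partition_ok z x \<theta> \<and> complete_fm U L T (z @ x) \<theta> \<and> extendible U L T z x \<theta> \<longrightarrow>
        (\<forall>(M :: ('a, 'f, 'r) struct) s. cam L T M \<and> range s \<subseteq> udom M \<and> sat M s \<theta> \<longrightarrow>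
           (\<exists>M0. elem_sub L M0 M \<and> s ` set z \<subseteq> udom M0 \<and> s ` set x \<inter> udom M0 = {}))"
  proof (intro allI impI)
    fix z x \<theta> and M :: "('a, 'f, 'r) struct" and s
    assume a: "partition_ok z x \<theta> \<and> complete_fm U L T (z @ x) \<theta> \<and> extendible U L T z x \<theta>"
      and b: "cam L T M \<and> range s \<subseteq> udom M \<and> sat M s \<theta>"
    obtain M0 where "cam L T M0" "elem_sub L M0 M" "s ` set z \<subseteq> udom M0" "s ` set x \<inter> udom M0 = {}"
      using part1_lemma[OF Twf, of U z x \<theta> M s] a b by blast
    then show "\<exists>M0. elem_sub L M0 M \<and> s ` set z \<subseteq> udom M0 \<and> s ` set x \<inter> udom M0 = {}" by blast
  qed
  have P2: "\<forall>z x z' x' \<theta>. partition_ok z x \<theta> \<and> complete_fm U L T (z @ x) \<theta> \<and> extendible U L T z x \<theta>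
        \<and> subseq z' z \<and> subseq x' x \<longrightarrow>
        extendible U L T z' x' (restr (z @ x) (z' @ x') \<theta>)"
    using part2_lemma by blast
  have P3: "\<forall>z x \<theta>. partition_ok z x \<theta> \<and> complete_fm U L T (z @ x) \<theta> \<longrightarrow>
        (extendible U L T z x \<theta> \<longleftrightarrow>
          (\<forall>xi\<in>set x. \<not> pseudo_alg U L T z xi (restr (z @ x) (z @ [xi]) \<theta>)))"
  proof (intro allI impI)
    fix z x \<theta> assume a: "partition_ok z x \<theta> \<and> complete_fm U L T (z @ x) \<theta>"
    show "extendible U L T z x \<theta> \<longleftrightarrow> (\<forall>xi\<in>set x. \<not> pseudo_alg U L T z xi (restr (z @ x) (z @ [xi]) \<theta>))"
    proof
      assume e: "extendible U L T z x \<theta>"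
      show "\<forall>xi\<in>set x. \<not> pseudo_alg U L T z xi (restr (z @ x) (z @ [xi]) \<theta>)"
        using part3a_lemma[OF Twf uncU] a e by blast
    next
      assume "\<forall>xi\<in>set x. \<not> pseudo_alg U L T z xi (restr (z @ x) (z @ [xi]) \<theta>)"
      then show "extendible U L T z x \<theta>" using part3b_lemma[OF compl unc] a by blast
    qed
  qed
  show ?thesis using P1 P2 P3 by blast
qed

end
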